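(* For the semi-Riemannian spectral triple $(\mathcal{A}_\theta,\mathcal{H},D)$ (noncommutative torus) and every $m\ge 2$, $$\pi(\Omega^m\mathcal{A}_\theta)=\Big\{\sum_j a^j\gamma(v_1^j)\cdots\gamma(v_m^j): a^j\in\mathcal{A}_\theta,\ v_i^j\in\mathbb{R}^n\Big\},$$ $$\pi(dj_0\cap\Omega^m\mathcal{A}_\theta)=\Big\{\sum_j a^j\gamma(v_1^j)\cdots\gamma(v_{m-2}^j): a^j\in\mathcal{A}_\theta,\ v_i^j\in\mathbb{R}^n\Big\}$$ (finite sums; for $m=2$ the second set is $\mathcal{A}_\theta$). The first formula holds also for $m=1$.
   Context: $\mathcal{A}_\theta$ is the smooth noncommutative torus: $\theta$ a real antisymmetric bilinear form on $\mathbb{R}^n$, $\mathcal{A}_\theta=\{\sum_{y\in\mathbb{Z}^n}a(y)u(y): a \text{ rapidly decreasing}\}$ with unitaries satisfying $u(y_1)u(y_2)=e^{\mathrm{i}\pi\theta(y_1,y_2)}u(y_1+y_2)$, trace $\tau(\sum a(y)u(y))=a(0)$, GNS space $\mathcal{H}_\tau$, derivations $\delta_j(\sum a(y)u(y))=2\pi\mathrm{i}\sum y_ja(y)u(y)$. $\Delta_{n,k}$ is the spinor module of the complex Clifford algebra of $q_{n,k}(x)=-x_1^2-\dots-x_k^2+x_{k+1}^2+\dots+x_n^2$ with Clifford map $\gamma:\mathbb{R}^n\to\mathrm{End}(\Delta_{n,k})$, $\gamma(v)^2=q_{n,k}(v)$; $\gamma_i=\gamma(e_i)$ for a basis with $\gamma_i^2=-1$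 ($i\le k$), $+1$ ($i>k$). $\mathcal{H}=\mathcal{H}_\tau\otimes\Delta_{n,k}$ with $\mathcal{A}_\theta$ acting by left multiplication on the first factor, and $D$ the closure of $\mathrm{i}^{k-1}\sum_i\gamma_i\delta_i$ on $\mathcal{A}_\theta\otimes\Delta_{n,k}$. $\Omega\mathcal{A}_\theta=\bigoplus_m\Omega^m\mathcal{A}_\theta$ is the universal differential envelope (spanned by $a_0\,da_1\cdots da_m$, with universal differential $d$), $\pi(a_0da_1\cdots da_m)=a_0[D,a_1]\cdots[D,a_m]$, and $j_0=\bigoplus_m\{\omega\in\Omega^m\mathcal{A}_\theta:\pi(\omega)=0\}$. *)

theory Defs
  imports "HOL-Analysis.Analysis"
begin

(* Lattice Z^n is int^'n, R^n is real^'n; the index type 'n has CARD('n) = n elements. *)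

definition rv :: "int^'n \<Rightarrow> real^'n" where
  "rv y = (\<chi> i. real_of_int (y $ i))"

definition rapid :: "(int^'n \<Rightarrow> 'b::real_normed_vector) \<Rightarrow> bool" where
  "rapid f \<longleftrightarrow> (\<forall>p::nat. \<exists>C. \<forall>y. (1 + norm (rv y)) ^ p * norm (f y) \<le> C)"

(* smooth noncommutative torus: elements sum_y a(y) u(y) represented by coefficient functions a *)
definition Atheta :: "(int^'n \<Rightarrow> complex) set" where
  "Atheta = {a. rapid a}"

(* the core A_theta (x) Delta inside H = H_tau (x) Delta = l^2(Z^n, C^N):
   rapidly decreasing C^N-valued coefficient functions *)
definition Hdom :: "(int^'n \<Rightarrow> complex^'s) set" where
  "Hdom = {xi. rapid xi}"

(* left multiplication by a on the first tensor factor: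
   (sum a(y) u(y)) (sum xi(z) u(z)) = sum_x (sum_y a(y) e^{i pi theta(y,x-y)} xi(x-y)) u(x) *)
definition lmult :: "(real^'n \<Rightarrow> real^'n \<Rightarrow> real) \<Rightarrow> (int^'n \<Rightarrow> complex)
    \<Rightarrow> (int^'n \<Rightarrow> complex^'s) \<Rightarrow> (int^'n \<Rightarrow> complex^'s)" where
  "lmult \<theta> a xi = (\<lambda>x. infsum (\<lambda>y. (a y * exp (\<i> * complex_of_real (pi * \<theta> (rv y) (rv (x - y))))) *s xi (x - y)) UNIV)"

definition qform :: "'n::finite set \<Rightarrow> real^'n \<Rightarrow> real" where
  "qform K v = (\<Sum>i\<in>UNIV. (if i \<in> K then -1 else 1) * (v $ i)^2)"

(* action of an endomorphism of Delta on the second tensor factor *)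
definition spin_act :: "complex^'s^'s \<Rightarrow> (int^'n \<Rightarrow> complex^'s) \<Rightarrow> (int^'n \<Rightarrow> complex^'s)" where
  "spin_act T xi = (\<lambda>x. T *v xi x)"

(* D = i^{k-1} sum_i gamma_i delta_i, delta_i(u(y)) = 2 pi i y_i u(y), gamma_i = gamma(e_i) *)
definition Dirac :: "'n::finite set \<Rightarrow> (real^'n \<Rightarrow> complex^'s^'s) \<Rightarrow> (int^'n \<Rightarrow> complex^'s) \<Rightarrow> (int^'n \<Rightarrow> complex^'s)" where
  "Dirac K \<gamma> xi = (\<lambda>x. (\<i> powi (int (card K) - 1)) *s
      (\<Sum>i\<in>UNIV. (2 * complex_of_real pi * \<i> * of_int (x $ i)) *s (\<gamma> (axis i 1) *v xi x)))"

definition commD :: "(real^'n \<Rightarrow> real^'n \<Rightarrow> real) \<Rightarrow> 'n::finite set \<Rightarrow> (real^'n \<Rightarrow> complex^'s^'s)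
    \<Rightarrow> (int^'n \<Rightarrow> complex) \<Rightarrow> (int^'n \<Rightarrow> complex^'s) \<Rightarrow> (int^'n \<Rightarrow> complex^'s)" where
  "commD \<theta> K \<gamma> a xi = (\<lambda>x. Dirac K \<gamma> (lmult \<theta> a xi) x - lmult \<theta> a (Dirac K \<gamma> xi) x)"

(* pi(a0 da1 ... dam) = a0 [D,a1] ... [D,am], given (a0, [a1,...,am]) *)
definition pi_form :: "(real^'n \<Rightarrow> real^'n \<Rightarrow> real) \<Rightarrow> 'n::finite set \<Rightarrow> (real^'n \<Rightarrow> complex^'s^'s)
    \<Rightarrow> (int^'n \<Rightarrow> complex) \<times> (int^'n \<Rightarrow> complex) list
    \<Rightarrow> (int^'n \<Rightarrow> complex^'s) \<Rightarrow> (int^'n \<Rightarrow> complex^'s)" where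
  "pi_form \<theta> K \<gamma> w = lmult \<theta> (fst w) \<circ> foldr (\<lambda>a T. commD \<theta> K \<gamma> a \<circ> T) (snd w) id"

(* pi(d(a0 da1 ... dam)) = pi(da0 da1 ... dam) = [D,a0][D,a1] ... [D,am] *)
definition pi_dform :: "(real^'n \<Rightarrow> real^'n \<Rightarrow> real) \<Rightarrow> 'n::finite set \<Rightarrow> (real^'n \<Rightarrow> complex^'s^'s)
    \<Rightarrow> (int^'n \<Rightarrow> complex) \<times> (int^'n \<Rightarrow> complex) list
    \<Rightarrow> (int^'n \<Rightarrow> complex^'s) \<Rightarrow> (int^'n \<Rightarrow> complex^'s)" where
  "pi_dform \<theta> K \<gamma> w = foldr (\<lambda>a T. commD \<theta> K \<gamma> a \<circ> T) (fst w # snd w) id"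

definition cliff_prod :: "(real^'n \<Rightarrow> complex^'s^'s) \<Rightarrow> (real^'n) list \<Rightarrow> complex^'s^'s" where
  "cliff_prod \<gamma> vs = foldr (\<lambda>v M. \<gamma> v ** M) vs (mat 1)"

definition gamma_op :: "(real^'n \<Rightarrow> real^'n \<Rightarrow> real) \<Rightarrow> (real^'n \<Rightarrow> complex^'s^'s)
    \<Rightarrow> (int^'n \<Rightarrow> complex) \<times> (real^'n) list
    \<Rightarrow> (int^'n \<Rightarrow> complex^'s) \<Rightarrow> (int^'n \<Rightarrow> complex^'s)" where
  "gamma_op \<theta> \<gamma> w = lmult \<theta> (fst w) \<circ> spin_act (cliff_prod \<gamma> (snd w))"

definition opsum :: "('w \<Rightarrow> (int^'n \<Rightarrow> complex^'s) \<Rightarrow> (int^'n \<Rightarrow> complex^'s)) \<Rightarrow> 'w list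
    \<Rightarrow> (int^'n \<Rightarrow> complex^'s) \<Rightarrow> (int^'n \<Rightarrow> complex^'s)" where
  "opsum F L = (\<lambda>xi x. sum_list (map (\<lambda>w. F w xi x) L))"

end

theory Submission
  imports Defs
begin

lemma rv_diff: "rv (x - y) = rv x - rv y" by (simp add: rv_def vec_eq_iff)
lemma rv_add: "rv (x + y) = rv x + rv y" by (simp add: rv_def vec_eq_iff)
lemma rv_0[simp]: "rv 0 = 0" by (simp add: rv_def vec_eq_iff)
lemma rv_minus: "rv (- x) = - rv x" by (simp add: rv_def vec_eq_iff)
lemma rv_axis: "rv (axis i 1) = axis i 1" by (simp add: rv_def vec_eq_iff axis_def)
lemma rv_nth: "rv y $ i = real_of_int (y $ i)" by (simp add: rv_def)

lemma weight_ineq: "1 + norm (rv x) \<le> (1 + norm (rv y)) * (1 + norm (rv (x - y)))"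
proof -
  have "rv x = rv y + rv (x - y)" by (simp add: rv_diff)
  then have "norm (rv x) \<le> norm (rv y) + norm (rv (x - y))" by (metis norm_triangle_ineq)
  moreover have "0 \<le> norm (rv y) * norm (rv (x - y))" by simp
  moreover have "(1 + norm (rv y)) * (1 + norm (rv (x - y))) = 1 + norm (rv y) + norm (rv (x - y)) + norm (rv y) * norm (rv (x - y))"
    by (simp add: algebra_simps)
  ultimately show ?thesis by linarith
qed

lemma weight_pow: "(1 + norm (rv x))^p \<le> (1 + norm (rv y))^p * (1 + norm (rv (x - y)))^p"
  by (metis power_mono power_mult_distrib weight_ineq add_nonneg_nonneg norm_ge_zero zero_le_one)

lemma rapidD: "rapid f \<Longrightarrow> \<exists>C. \<forall>y. (1 + norm (rv y))^p * norm (f y) \<le> C"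
  by (simp add: rapid_def)

lemma rapid_bounded: assumes "rapid f" shows "\<exists>C. \<forall>y. norm (f y) \<le> C"
  using rapidD[OF assms, of 0] by simp

lemma rapid_compare:
  assumes "rapid f" "0 \<le> c" "\<And>y. norm (g y) \<le> c * (1 + norm (rv y))^k * norm (f y)"
  shows "rapid g"
  unfolding rapid_def
proof
  fix p
  obtain C where C: "\<And>y. (1 + norm (rv y))^(p+k) * norm (f y) \<le> C" using rapidD[OF assms(1)] by blast
  show "\<exists>C. \<forall>y. (1 + norm (rv y)) ^ p * norm (g y) \<le> C"
  proof (intro exI allI)
    fix y
    have "(1 + norm (rv y)) ^ p * norm (g y) \<le> (1 + norm (rv y)) ^ p * (c * (1 + norm (rv y))^k * norm (f y))"
      by (intro mult_left_mono assms(3)) simp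
    also have "\<dots> = c * ((1 + norm (rv y))^(p+k) * norm (f y))" by (simp add: power_add algebra_simps)
    also have "\<dots> \<le> c * C" by (intro mult_left_mono C assms(2))
    finally show "(1 + norm (rv y)) ^ p * norm (g y) \<le> c * C" .
  qed
qed

lemma rapid_add: assumes "rapid f" "rapid g" shows "rapid (\<lambda>y. f y + g y)"
  unfolding rapid_def
proof
  fix p
  obtain C1 where C1: "\<And>y. (1 + norm (rv y))^p * norm (f y) \<le> C1" using rapidD[OF assms(1)] by blast
  obtain C2 where C2: "\<And>y. (1 + norm (rv y))^p * norm (g y) \<le> C2" using rapidD[OF assms(2)] by blast
  show "\<exists>C. \<forall>y. (1 + norm (rv y)) ^ p * norm (f y + g y) \<le> C"
  proof (intro exI allI)
    fix y
    have "(1 + norm (rv y)) ^ p * norm (f y + g y) \<le> (1 + norm (rv y)) ^ p * (norm (f y) + norm (g y))"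
      by (intro mult_left_mono norm_triangle_ineq) simp
    also have "\<dots> \<le> C1 + C2" using C1[of y] C2[of y] by (simp add: algebra_simps)
    finally show "(1 + norm (rv y)) ^ p * norm (f y + g y) \<le> C1 + C2" .
  qed
qed

lemma rapid_zero: "rapid (\<lambda>y. 0)" by (auto simp: rapid_def)

lemma rapid_sum: "finite S \<Longrightarrow> (\<And>j. j \<in> S \<Longrightarrow> rapid (f j)) \<Longrightarrow> rapid (\<lambda>y. \<Sum>j\<in>S. f j y)"
  by (induction S rule: finite_induct) (auto intro: rapid_add rapid_zero)

lemma rapid_sum_list: "(\<And>w. w \<in> set L \<Longrightarrow> rapid (f w)) \<Longrightarrow> rapid (\<lambda>y. sum_list (map (\<lambda>w. f w y) L))"
  by (induction L) (auto intro: rapid_add rapid_zero)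

lemma rapid_scale_bound: "rapid f \<Longrightarrow> (\<And>y. norm (g y) \<le> c * norm (f y)) \<Longrightarrow> 0 \<le> c \<Longrightarrow> rapid g"
  by (rule rapid_compare[where k=0]) auto

definition w1 :: "int \<Rightarrow> real" where "w1 k = 1 / (1 + real_of_int \<bar>k\<bar>)^2"

lemma w1_nonneg: "0 \<le> w1 k" by (simp add: w1_def)

lemma w1_summable: "w1 summable_on UNIV"
proof -
  have s: "summable (\<lambda>n::nat. inverse (real n ^ 2))" by (rule inverse_power_summable) simp
  have s2: "summable (\<lambda>n::nat. inverse (real (Suc n) ^ 2))"
    using s summable_Suc_iff[of "\<lambda>n::nat. inverse (real n ^ 2)"] by simp
  have e1: "(\<lambda>n::nat. inverse (real (Suc n) ^ 2)) summable_on UNIV"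
    using s2 by (subst summable_on_UNIV_nonneg_real_iff) auto
  have a: "(w1 \<circ> int) summable_on UNIV"
    using e1 by (simp add: o_def w1_def divide_inverse add.commute)
  have b: "(w1 \<circ> (\<lambda>n::nat. - int n - 1)) summable_on UNIV"
  proof (rule summable_on_comparison_test[OF e1])
    fix n :: nat
    show "(w1 \<circ> (\<lambda>n::nat. - int n - 1)) n \<le> inverse (real (Suc n) ^ 2)"
      by (simp add: w1_def divide_inverse add.commute)
    show "0 \<le> (w1 \<circ> (\<lambda>n::nat. - int n - 1)) n" by (simp add: w1_nonneg)
  qed
  have a': "w1 summable_on (range int)"
    using a by (subst summable_on_reindex) (auto simp: inj_on_def)
  have b': "w1 summable_on (range (\<lambda>n::nat. - int n - 1))"
    using b by (subst summable_on_reindex) (auto simp: inj_on_def)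
  have u: "range int \<union> range (\<lambda>n::nat. - int n - 1) = UNIV"
  proof (safe)
    fix k :: int
    assume "k \<notin> range (\<lambda>n::nat. - int n - 1)"
    then have "k \<ge> 0"
    proof (rule contrapos_np)
      assume "\<not> k \<ge> 0"
      then have "k = - int (nat (- k - 1)) - 1" by simp
      then show "k \<in> range (\<lambda>n::nat. - int n - 1)" by blast
    qed
    then show "k \<in> range int" by (metis nonneg_int_cases rangeI)
  qed simp_all
  show ?thesis using summable_on_union[OF a' b'] u by simp
qed


lemma wn_summable: "(\<lambda>y::int^'n::finite. \<Prod>i\<in>UNIV. w1 (y$i)) summable_on UNIV"
proof (rule nonneg_bdd_above_summable_on)
  show "\<And>y. y \<in> UNIV \<Longrightarrow> 0 \<le> (\<Prod>i\<in>UNIV. w1 (y$i))" by (simp add: w1_nonneg prod_nonneg)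
  define S where "S = infsum w1 UNIV"
  show "bdd_above (sum (\<lambda>y::int^'n. \<Prod>i\<in>UNIV. w1 (y$i)) ` {F. F \<subseteq> UNIV \<and> finite F})"
  proof (rule bdd_aboveI2)
    fix F :: "(int^'n) set" assume "F \<in> {F. F \<subseteq> UNIV \<and> finite F}"
    then have fF: "finite F" by simp
    define B where "B = (\<Union>i. (\<lambda>y. y$i) ` F)"
    have fB: "finite B" unfolding B_def using fF by simp
    define P where "P = PiE (UNIV::'n set) (\<lambda>_. B)"
    have fP: "finite P" unfolding P_def using fB by (simp add: finite_PiE)
    define G where "G = vec_lambda ` P"
    have fG: "finite G" unfolding G_def using fP by simp
    have FG: "F \<subseteq> G"
    proof
      fix y assume "y \<in> F"
      then have "(\<lambda>i. y$i) \<in> P" unfolding P_def B_def by auto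
      then show "y \<in> G" unfolding G_def by (metis image_eqI vec_nth_inverse)
    qed
    have "(\<Sum>y\<in>F. \<Prod>i\<in>UNIV. w1 (y$i)) \<le> (\<Sum>y\<in>G. \<Prod>i\<in>UNIV. w1 (y$i))"
      by (rule sum_mono2[OF fG FG]) (simp add: w1_nonneg prod_nonneg)
    also have "\<dots> = (\<Sum>g\<in>P. \<Prod>i\<in>UNIV. w1 (g i))"
      unfolding G_def by (subst sum.reindex) (auto simp: inj_on_def vec_lambda_inject)
    also have "\<dots> = (\<Prod>i\<in>(UNIV::'n set). \<Sum>k\<in>B. w1 k)"
      unfolding P_def by (subst prod_sum_PiE) (auto simp: fB)
    also have "\<dots> \<le> (\<Prod>i\<in>(UNIV::'n set). S)"
      by (rule prod_mono) (auto simp: S_def sum_nonneg w1_nonneg intro!: finite_sum_le_infsum w1_summable fB)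
    finally show "(\<Sum>y\<in>F. \<Prod>i\<in>UNIV. w1 (y$i)) \<le> (\<Prod>i\<in>(UNIV::'n set). S)" .
  qed
qed

lemma weight_prod: "(\<Prod>i\<in>UNIV. (1 + real_of_int \<bar>y$i\<bar>)^2) \<le> (1 + norm (rv (y::int^'n::finite)))^(2*CARD('n))"
proof -
  have "(\<Prod>i\<in>UNIV. (1 + real_of_int \<bar>y$i\<bar>)^2) \<le> (\<Prod>i\<in>(UNIV::'n set). (1 + norm (rv y))^2)"
  proof (rule prod_mono, safe)
    fix i
    have "\<bar>rv y $ i\<bar> \<le> norm (rv y)" by (rule component_le_norm_cart)
    then have "real_of_int \<bar>y$i\<bar> \<le> norm (rv y)" by (simp add: rv_nth)
    then show "(1 + real_of_int \<bar>y$i\<bar>)^2 \<le> (1 + norm (rv y))^2"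
      by (intro power_mono) auto
  qed simp
  also have "\<dots> = (1 + norm (rv y))^(2*CARD('n))" by (simp only: prod_constant power_mult)
  finally show ?thesis .
qed

lemma rapid_norm_summable:
  fixes f :: "int^'n::finite \<Rightarrow> 'b::real_normed_vector"
  assumes "rapid f" shows "(\<lambda>y. norm (f y)) summable_on UNIV"
proof -
  obtain C where C: "\<And>y. (1 + norm (rv y))^(2*CARD('n)) * norm (f y) \<le> C" using rapidD[OF assms] by blast
  show ?thesis
  proof (rule summable_on_comparison_test)
    show "(\<lambda>y. C * (\<Prod>i\<in>UNIV. w1 (y$i))) summable_on UNIV"
      by (rule summable_on_cmult_right[OF wn_summable])
    fix y :: "int^'n"
    show "0 \<le> norm (f y)" by simp
    define P where "P = (\<Prod>i\<in>UNIV. (1 + real_of_int \<bar>y$i\<bar>)^2)"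
    have Ppos: "0 < P" unfolding P_def by (intro prod_pos) auto
    have "norm (f y) * P \<le> norm (f y) * (1 + norm (rv y))^(2*CARD('n))"
      unfolding P_def by (intro mult_left_mono weight_prod) simp
    also have "\<dots> \<le> C" using C[of y] by (simp add: mult.commute)
    finally have "norm (f y) \<le> C / P" using Ppos by (simp add: field_simps)
    also have "C / P = C * (\<Prod>i\<in>UNIV. w1 (y$i))"
      unfolding P_def w1_def by (simp add: prod_dividef divide_inverse prod_inversef[symmetric, unfolded o_def])
    finally show "norm (f y) \<le> C * (\<Prod>i\<in>UNIV. w1 (y$i))" .
  qed
qed

lemma summable_dom:
  fixes f :: "'a \<Rightarrow> 'b::banach"
  assumes "g summable_on A" "\<And>y. y \<in> A \<Longrightarrow> norm (f y) \<le> g y"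
  shows "f summable_on A" "(\<lambda>y. norm (f y)) summable_on A" "norm (infsum f A) \<le> infsum g A"
proof -
  show ns: "(\<lambda>y. norm (f y)) summable_on A" by (rule Infinite_Sum.abs_summable_on_comparison_test'[OF assms])
  show "f summable_on A" by (rule abs_summable_summable[OF ns])
  have "norm (infsum f A) \<le> infsum (\<lambda>y. norm (f y)) A" by (rule norm_infsum_bound[OF ns])
  also have "\<dots> \<le> infsum g A" by (rule infsum_mono[OF ns assms(1)]) (use assms(2) in auto)
  finally show "norm (infsum f A) \<le> infsum g A" .
qed

lemma rapid_weighted_summable:
  fixes f :: "int^'n::finite \<Rightarrow> 'b::real_normed_vector"
  assumes "rapid f" shows "(\<lambda>y. (1 + norm (rv y))^k * norm (f y)) summable_on UNIV"
proof -
  have r: "rapid (\<lambda>y. ((1 + norm (rv y))^k) *\<^sub>R f y)"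
    by (rule rapid_compare[OF assms, of 1 _ k]) simp_all
  show ?thesis using rapid_norm_summable[OF r] by simp
qed


definition sm :: "complex \<Rightarrow> complex^'s^'s \<Rightarrow> complex^'s^'s" where
  "sm c M = (\<chi> i j. c * M$i$j)"

lemma scaleR_vec_nth_c[simp]: "(r *\<^sub>R (v::complex^'a)) $ i = complex_of_real r * v $ i"
  unfolding vector_scaleR_component by (simp add: scaleR_conv_of_real)
lemma scaleR_mat_nth_c[simp]: "(r *\<^sub>R (M::complex^'a^'b)) $ i $ j = complex_of_real r * M $ i $ j"
  unfolding vector_scaleR_component by (simp add: scaleR_conv_of_real)

lemma sm_nth[simp]: "sm c M $ i $ j = c * M $ i $ j" by (simp add: sm_def)
lemma sm_mv: "sm c M *v v = c *s (M *v v)"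
  by (simp add: vec_eq_iff matrix_vector_mult_def sum_distrib_left mult.assoc)
lemma sm_mm_left: "sm c M ** N = sm c (M ** N)"
  by (simp add: vec_eq_iff matrix_matrix_mult_def sum_distrib_left mult.assoc)
lemma sm_mm_right: "M ** sm c N = sm c (M ** N)"
  by (simp add: vec_eq_iff matrix_matrix_mult_def sum_distrib_left mult_ac)
lemma sm_add_left: "sm (a + b) M = sm a M + sm b M" by (simp add: vec_eq_iff algebra_simps)
lemma sm_add_right: "sm a (M + N) = sm a M + sm a N" by (simp add: vec_eq_iff algebra_simps)
lemma sm_diff_right: "sm a (M - N) = sm a M - sm a N" by (simp add: vec_eq_iff algebra_simps)
lemma sm_minus_right: "sm a (- M) = - sm a M" by (simp add: vec_eq_iff algebra_simps)
lemma sm_minus_left: "sm (- a) M = - sm a M" by (simp add: vec_eq_iff algebra_simps)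
lemma sm_mult: "sm a (sm b M) = sm (a * b) M" by (simp add: vec_eq_iff algebra_simps)
lemma sm_one[simp]: "sm 1 M = M" by (simp add: vec_eq_iff)
lemma sm_zero_left[simp]: "sm 0 M = 0" by (simp add: vec_eq_iff)
lemma sm_zero_right[simp]: "sm c 0 = 0" by (simp add: vec_eq_iff)
lemma sm_sum_right: "sm c (sum f S) = (\<Sum>x\<in>S. sm c (f x))"
  by (induction S rule: infinite_finite_induct) (auto simp: sm_add_right)
lemma sm_sum_left: "sm (sum f S) M = (\<Sum>x\<in>S. sm (f x) M)"
  by (induction S rule: infinite_finite_induct) (auto simp: sm_add_left)
lemma sm_scaleR: "r *\<^sub>R M = sm (complex_of_real r) M"
  unfolding vec_eq_iff by (simp del: vector_scaleR_component)
lemma sm_mat: "sm c (mat d) = mat (c * d)" by (simp add: vec_eq_iff mat_def)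

lemma smul_vec_nth[simp]: "(c *s v) $ i = c * v $ i" by simp

lemma norm_smul_vec: "norm (c *s (v::complex^'s)) = norm c * norm v"
  unfolding norm_vec_def by (simp add: norm_mult L2_set_right_distrib)

lemma norm_sm: "norm (sm c M) = norm c * norm M"
proof -
  have "\<And>i. sm c M $ i = c *s (M $ i)" by (simp add: vec_eq_iff)
  then show ?thesis unfolding norm_vec_def[of "sm c M"] norm_vec_def[of M]
    by (simp add: norm_smul_vec L2_set_right_distrib)
qed

lemma norm_vec_le_sum: "norm (x::'a::real_normed_vector^'s) \<le> (\<Sum>i\<in>UNIV. norm (x $ i))"
  unfolding norm_vec_def by (rule L2_set_le_sum) simp

lemma norm_mv: "norm ((M::complex^'s^'s) *v (v::complex^'s)) \<le> real CARD('s)^2 * norm M * norm v"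
proof -
  have c: "norm ((M *v v) $ i) \<le> real CARD('s) * (norm M * norm v)" for i
  proof -
    have "norm ((M *v v) $ i) = norm (\<Sum>j\<in>UNIV. M$i$j * v$j)" by (simp add: matrix_vector_mult_def)
    also have "\<dots> \<le> (\<Sum>j\<in>UNIV. norm (M$i$j * v$j))" by (rule norm_sum)
    also have "\<dots> \<le> (\<Sum>j\<in>(UNIV::'s set). norm M * norm v)"
    proof (rule sum_mono)
      fix j
      have "norm (M$i$j) \<le> norm M" using Finite_Cartesian_Product.norm_nth_le[of "M$i" j] Finite_Cartesian_Product.norm_nth_le[of M i] by linarith
      then show "norm (M$i$j * v$j) \<le> norm M * norm v"
        by (simp add: norm_mult mult_mono Finite_Cartesian_Product.norm_nth_le)
    qed
    finally show ?thesis by simp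
  qed
  have "norm (M *v v) \<le> (\<Sum>i\<in>UNIV. norm ((M *v v) $ i))" by (rule norm_vec_le_sum)
  also have "\<dots> \<le> (\<Sum>i\<in>(UNIV::'s set). real CARD('s) * (norm M * norm v))" using c by (intro sum_mono) auto
  finally show ?thesis by (simp add: power2_eq_square mult_ac)
qed

lemma norm_mm: "norm ((M::complex^'s^'s) ** (N::complex^'s^'s)) \<le> real CARD('s)^3 * norm M * norm N"
proof -
  have c: "norm ((M ** N) $ i $ j) \<le> real CARD('s) * (norm M * norm N)" for i j
  proof -
    have "norm ((M ** N) $ i $ j) = norm (\<Sum>k\<in>UNIV. M$i$k * N$k$j)" by (simp add: matrix_matrix_mult_def)
    also have "\<dots> \<le> (\<Sum>k\<in>UNIV. norm (M$i$k * N$k$j))" by (rule norm_sum)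
    also have "\<dots> \<le> (\<Sum>k\<in>(UNIV::'s set). norm M * norm N)"
    proof (rule sum_mono)
      fix k
      have "norm (M$i$k) \<le> norm M" using Finite_Cartesian_Product.norm_nth_le[of "M$i" k] Finite_Cartesian_Product.norm_nth_le[of M i] by linarith
      moreover have "norm (N$k$j) \<le> norm N" using Finite_Cartesian_Product.norm_nth_le[of "N$k" j] Finite_Cartesian_Product.norm_nth_le[of N k] by linarith
      ultimately show "norm (M$i$k * N$k$j) \<le> norm M * norm N"
        by (simp add: norm_mult mult_mono)
    qed
    finally show ?thesis by simp
  qed
  have r: "norm ((M ** N) $ i) \<le> real CARD('s) * (real CARD('s) * (norm M * norm N))" for i
  proof -
    have "norm ((M ** N) $ i) \<le> (\<Sum>j\<in>UNIV. norm ((M ** N) $ i $ j))" by (rule norm_vec_le_sum)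
    also have "\<dots> \<le> (\<Sum>j\<in>(UNIV::'s set). real CARD('s) * (norm M * norm N))" using c by (intro sum_mono) auto
    finally show ?thesis by simp
  qed
  have "norm (M ** N) \<le> (\<Sum>i\<in>UNIV. norm ((M ** N) $ i))" by (rule norm_vec_le_sum)
  also have "\<dots> \<le> (\<Sum>i\<in>(UNIV::'s set). real CARD('s) * (real CARD('s) * (norm M * norm N)))"
    using r by (intro sum_mono) auto
  finally show ?thesis by (simp add: power3_eq_cube mult_ac)
qed

lemma bl_smul: "bounded_linear (\<lambda>v::complex^'s. c *s v)"
  by (rule iffD1[OF linear_conv_bounded_linear])
     (simp add: linear_iff vec_eq_iff algebra_simps)

lemma bl_mv_right: "bounded_linear (\<lambda>v::complex^'s. M *v v)"
  by (rule iffD1[OF linear_conv_bounded_linear]) (rule matrix_vector_mul_linear)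

lemma bl_mv_left: "bounded_linear (\<lambda>M::complex^'s^'s. M *v v)"
  by (rule iffD1[OF linear_conv_bounded_linear])
     (simp add: linear_iff vec_eq_iff algebra_simps matrix_vector_mult_def
       sum.distrib sum_distrib_left scaleR_sum_right)

lemma bl_mm_left: "bounded_linear (\<lambda>M::complex^'s^'s. M ** N)"
  by (rule iffD1[OF linear_conv_bounded_linear])
     (simp add: linear_iff vec_eq_iff algebra_simps matrix_matrix_mult_def
       sum.distrib sum_distrib_left scaleR_sum_right)

lemma bl_mm_right: "bounded_linear (\<lambda>N::complex^'s^'s. M ** N)"
  by (rule iffD1[OF linear_conv_bounded_linear])
     (simp add: linear_iff vec_eq_iff algebra_simps matrix_matrix_mult_def
       sum.distrib sum_distrib_left scaleR_sum_right)

lemma bl_sm: "bounded_linear (\<lambda>M::complex^'s^'s. sm c M)"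
  by (rule iffD1[OF linear_conv_bounded_linear])
     (simp add: linear_iff vec_eq_iff algebra_simps)

lemma bl_vec_smul_left: "bounded_linear (\<lambda>c::complex. c *s (v::complex^'s))"
  by (rule iffD1[OF linear_conv_bounded_linear])
     (simp add: linear_iff vec_eq_iff algebra_simps)

lemma bl_sm_left: "bounded_linear (\<lambda>c::complex. sm c (M::complex^'s^'s))"
  by (rule iffD1[OF linear_conv_bounded_linear])
     (simp add: linear_iff vec_eq_iff algebra_simps)

lemma infsum_bl:
  assumes "bounded_linear h" "f summable_on A"
  shows "infsum (\<lambda>x. h (f x)) A = h (infsum f A)"
  using assms by (metis has_sum_bounded_linear has_sum_infsum infsumI)

lemma summable_bl:
  assumes "bounded_linear h" "f summable_on A"
  shows "(\<lambda>x. h (f x)) summable_on A"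
  using assms by (rule summable_on_bounded_linear)

lemma infsum_diff':
  fixes f g :: "'a \<Rightarrow> 'b::{topological_ab_group_add, t2_space}"
  assumes "f summable_on A" "g summable_on A"
  shows "infsum (\<lambda>x. f x - g x) A = infsum f A - infsum g A"
proof -
  have "infsum (\<lambda>x. f x + - g x) A = infsum f A + infsum (\<lambda>x. - g x) A"
    by (rule infsum_add[OF assms(1)]) (simp add: summable_on_uminus assms(2))
  then show ?thesis by (simp add: infsum_uminus)
qed

lemma summable_on_diff':
  fixes f g :: "'a \<Rightarrow> 'b::{topological_ab_group_add}"
  assumes "f summable_on A" "g summable_on A"
  shows "(\<lambda>x. f x - g x) summable_on A"
  using summable_on_add[OF assms(1), of "\<lambda>x. - g x"] assms(2) by (simp add: summable_on_uminus)

lemma infsum_sum':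
  fixes f :: "'i \<Rightarrow> 'a \<Rightarrow> 'b::{topological_comm_monoid_add, t2_space}"
  assumes "finite S" "\<And>j. j \<in> S \<Longrightarrow> f j summable_on A"
  shows "infsum (\<lambda>x. \<Sum>j\<in>S. f j x) A = (\<Sum>j\<in>S. infsum (f j) A)"
    "(\<lambda>x. \<Sum>j\<in>S. f j x) summable_on A"
  using assms
proof (induction S rule: finite_induct)
  case empty
  { case 1 then show ?case by simp }
  { case 2 then show ?case by simp }
next
  case (insert a S)
  { case 1 then show ?case using insert by (simp add: infsum_add summable_on_add) }
  { case 2 then show ?case using insert by (simp add: summable_on_add) }
qed

lemma infsum_single_point:
  assumes "\<And>y. y \<noteq> a \<Longrightarrow> f y = 0"
  shows "infsum f UNIV = f a"
proof -
  have "infsum f UNIV = infsum f {a}" by (rule infsum_cong_neutral) (use assms in auto)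
  then show ?thesis by simp
qed


definition ph :: "(real^'n \<Rightarrow> real^'n \<Rightarrow> real) \<Rightarrow> int^'n \<Rightarrow> int^'n \<Rightarrow> complex" where
  "ph \<theta> y w = exp (\<i> * complex_of_real (pi * \<theta> (rv y) (rv w)))"

definition Top :: "(real^'n \<Rightarrow> real^'n \<Rightarrow> real) \<Rightarrow> (int^'n \<Rightarrow> complex^'s^'s)
    \<Rightarrow> (int^'n \<Rightarrow> complex^'s) \<Rightarrow> (int^'n \<Rightarrow> complex^'s)" where
  "Top \<theta> K xi = (\<lambda>x. infsum (\<lambda>y. ph \<theta> y (x - y) *s (K y *v xi (x - y))) UNIV)"

definition conv :: "(real^'n \<Rightarrow> real^'n \<Rightarrow> real) \<Rightarrow> (int^'n \<Rightarrow> complex^'s^'s)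
    \<Rightarrow> (int^'n \<Rightarrow> complex^'s^'s) \<Rightarrow> (int^'n \<Rightarrow> complex^'s^'s)" where
  "conv \<theta> K L = (\<lambda>z. infsum (\<lambda>y. sm (ph \<theta> y (z - y)) (K y ** L (z - y))) UNIV)"

lemma norm_ph[simp]: "norm (ph \<theta> y w) = 1"
  unfolding ph_def by (metis norm_exp_i_times of_real_mult)

lemma ph_nonzero[simp]: "ph \<theta> y w \<noteq> 0"
  by (metis norm_ph norm_zero zero_neq_one)

lemma gen_rapid:
  fixes K :: "int^'n::finite \<Rightarrow> 'a::real_normed_vector" and L :: "int^'n \<Rightarrow> 'b::real_normed_vector"
    and h :: "int^'n \<Rightarrow> int^'n \<Rightarrow> 'c::banach"
  assumes K: "rapid K" and L: "rapid L" and c: "0 \<le> c"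
    and hb: "\<And>z y. norm (h z y) \<le> c * norm (K y) * norm (L (z - y))"
  shows "rapid (\<lambda>z. infsum (h z) UNIV)" "\<And>z. h z summable_on UNIV"
proof -
  show sm: "h z summable_on UNIV" for z
  proof -
    obtain C where C: "\<And>w. norm (L w) \<le> C" using rapid_bounded[OF L] by blast
    have "(\<lambda>y. (c * C) * norm (K y)) summable_on UNIV"
      by (rule summable_on_cmult_right[OF rapid_norm_summable[OF K]])
    then show ?thesis
    proof (rule summable_dom(1))
      fix y
      have "norm (h z y) \<le> c * norm (K y) * norm (L (z - y))" by (rule hb)
      also have "\<dots> \<le> c * norm (K y) * C" by (intro mult_left_mono C) (simp add: c)
      finally show "norm (h z y) \<le> (c * C) * norm (K y)" by (simp add: mult_ac)
    qed
  qed
  show "rapid (\<lambda>z. infsum (h z) UNIV)"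
    unfolding rapid_def
  proof
    fix p
    obtain C where C: "\<And>w. (1 + norm (rv w))^p * norm (L w) \<le> C" using rapidD[OF L] by blast
    have C0: "0 \<le> C" using C[of 0] by (metis mult_nonneg_nonneg norm_ge_zero order_trans zero_le_power
          add_nonneg_nonneg zero_le_one)
    define G where "G y = (c * C) * ((1 + norm (rv y))^p * norm (K y))" for y
    have G: "G summable_on UNIV" unfolding G_def
      by (rule summable_on_cmult_right[OF rapid_weighted_summable[OF K]])
    show "\<exists>C. \<forall>z. (1 + norm (rv z)) ^ p * norm (infsum (h z) UNIV) \<le> C"
    proof (intro exI allI)
      fix z
      have b: "norm ((1 + norm (rv z))^p *\<^sub>R h z y) \<le> G y" for y
      proof -
        have "norm ((1 + norm (rv z))^p *\<^sub>R h z y) = (1 + norm (rv z))^p * norm (h z y)" by simp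
        also have "\<dots> \<le> (1 + norm (rv y))^p * (1 + norm (rv (z - y)))^p * (c * norm (K y) * norm (L (z - y)))"
          by (intro mult_mono weight_pow hb) (auto simp: c)
        also have "\<dots> = (c * ((1 + norm (rv y))^p * norm (K y))) * ((1 + norm (rv (z - y)))^p * norm (L (z - y)))"
          by (simp add: mult_ac)
        also have "\<dots> \<le> (c * ((1 + norm (rv y))^p * norm (K y))) * C"
          by (intro mult_left_mono C) (simp add: c)
        finally show ?thesis by (simp add: G_def mult_ac)
      qed
      have "norm (infsum (\<lambda>y. (1 + norm (rv z))^p *\<^sub>R h z y) UNIV) \<le> infsum G UNIV"
        by (rule summable_dom(3)[OF G b])
      then show "(1 + norm (rv z)) ^ p * norm (infsum (h z) UNIV) \<le> infsum G UNIV"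
        by (simp add: infsum_scaleR_right)
    qed
  qed
qed

lemma top_summable:
  fixes K :: "int^'n::finite \<Rightarrow> complex^'s^'s"
  assumes "rapid K" "rapid xi"
  shows "(\<lambda>y. ph \<theta> y (x - y) *s (K y *v xi (x - y))) summable_on UNIV"
  by (rule gen_rapid(2)[OF assms, of "real CARD('s)^2" "\<lambda>x y. ph \<theta> y (x - y) *s (K y *v xi (x - y))"])
     (auto simp: norm_smul_vec norm_mv)

lemma top_rapid:
  fixes K :: "int^'n::finite \<Rightarrow> complex^'s^'s"
  assumes "rapid K" "rapid xi"
  shows "rapid (Top \<theta> K xi)"
  unfolding Top_def
  by (rule gen_rapid(1)[OF assms, of "real CARD('s)^2"]) (auto simp: norm_smul_vec norm_mv)

lemma conv_summable:
  fixes K :: "int^'n::finite \<Rightarrow> complex^'s^'s"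
  assumes "rapid K" "rapid L"
  shows "(\<lambda>y. sm (ph \<theta> y (z - y)) (K y ** L (z - y))) summable_on UNIV"
  by (rule gen_rapid(2)[OF assms, of "real CARD('s)^3" "\<lambda>z y. sm (ph \<theta> y (z - y)) (K y ** L (z - y))"])
     (auto simp: norm_sm norm_mm)

lemma conv_rapid:
  fixes K :: "int^'n::finite \<Rightarrow> complex^'s^'s"
  assumes "rapid K" "rapid L"
  shows "rapid (conv \<theta> K L)"
  unfolding conv_def
  by (rule gen_rapid(1)[OF assms, of "real CARD('s)^3"]) (auto simp: norm_sm norm_mm)


definition dI :: "int^'n \<Rightarrow> complex^'s^'s" where
  "dI = (\<lambda>y. if y = 0 then mat 1 else 0)"

lemma rapid_fin_support:
  assumes "\<And>y. y \<noteq> 0 \<Longrightarrow> f y = 0"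
  shows "rapid f"
  unfolding rapid_def
proof
  fix p
  show "\<exists>C. \<forall>y. (1 + norm (rv y)) ^ p * norm (f y) \<le> C"
  proof (rule exI[of _ "norm (f 0)"], rule allI)
    fix y :: "int^'a"
    show "(1 + norm (rv y)) ^ p * norm (f y) \<le> norm (f 0)"
      by (cases "y = 0") (auto simp: assms)
  qed
qed

lemma dI_rapid: "rapid dI" by (rule rapid_fin_support) (simp add: dI_def)

lemma ph_0_left[simp]: "bilinear \<theta> \<Longrightarrow> ph \<theta> 0 w = 1"
  by (simp add: ph_def bilinear_lzero)
lemma ph_0_right[simp]: "bilinear \<theta> \<Longrightarrow> ph \<theta> y 0 = 1"
  by (simp add: ph_def bilinear_rzero)

lemma expi_add: "exp (\<i> * complex_of_real (pi * a)) * exp (\<i> * complex_of_real (pi * b)) = exp (\<i> * complex_of_real (pi * (a + b)))"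
  by (simp add: exp_add[symmetric] distrib_left ring_distribs)

lemma ph_cocycle:
  assumes "bilinear \<theta>"
  shows "ph \<theta> y (x - y) * ph \<theta> (z - y) (x - z) = ph \<theta> z (x - z) * ph \<theta> y (z - y)"
proof -
  have "\<theta> (rv y) (rv (x - y)) + \<theta> (rv (z - y)) (rv (x - z)) = \<theta> (rv z) (rv (x - z)) + \<theta> (rv y) (rv (z - y))"
    using assms by (simp add: rv_diff bilinear_lsub bilinear_rsub)
  then show ?thesis unfolding ph_def expi_add by simp
qed

lemma lmult_Top: "lmult \<theta> a xi = Top \<theta> (\<lambda>y. sm (a y) (mat 1)) xi"
  unfolding lmult_def Top_def ph_def
  by (simp add: sm_mv vector_smult_assoc mult.commute)

lemma gamma_op_Top: "gamma_op \<theta> \<gamma> (a, vs) xi = Top \<theta> (\<lambda>y. sm (a y) (cliff_prod \<gamma> vs)) xi"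
  unfolding gamma_op_def lmult_def Top_def ph_def spin_act_def
  by (simp add: sm_mv vector_smult_assoc mult.commute)

lemma id_Top:
  assumes "bilinear \<theta>"
  shows "Top \<theta> dI xi = xi"
proof
  fix x
  have "Top \<theta> dI xi x = ph \<theta> 0 (x - 0) *s (dI 0 *v xi (x - 0))"
    unfolding Top_def using infsum_single_point[where f="\<lambda>y. ph \<theta> y (x - y) *s (dI y *v xi (x - y))" and a=0]
    by (simp add: dI_def)
  then show "Top \<theta> dI xi x = xi x" using assms by (simp add: dI_def)
qed

lemma Top_zero_kernel: "Top \<theta> (\<lambda>y. 0) xi = (\<lambda>x. 0)"
  unfolding Top_def by simp

lemma Top_add_kernel:
  fixes K1 :: "int^'n::finite \<Rightarrow> complex^'s^'s"
  assumes "rapid K1" "rapid K2" "rapid xi"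
  shows "Top \<theta> (\<lambda>y. K1 y + K2 y) xi x = Top \<theta> K1 xi x + Top \<theta> K2 xi x"
  unfolding Top_def
  by (simp add: matrix_vector_mult_add_rdistrib vector_add_ldistrib
      infsum_add[OF top_summable[OF assms(1,3)] top_summable[OF assms(2,3)]])

lemma Top_sum_list_kernel:
  fixes f :: "'w \<Rightarrow> int^'n::finite \<Rightarrow> complex^'s^'s"
  assumes "\<And>w. w \<in> set L \<Longrightarrow> rapid (f w)" "rapid xi"
  shows "Top \<theta> (\<lambda>y. sum_list (map (\<lambda>w. f w y) L)) xi x = sum_list (map (\<lambda>w. Top \<theta> (f w) xi x) L)"
  using assms(1)
proof (induction L)
  case Nil
  then show ?case using Top_zero_kernel[of \<theta> xi] by (simp add: fun_eq_iff)
next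
  case (Cons a L)
  have r: "rapid (\<lambda>y. sum_list (map (\<lambda>w. f w y) L))" by (rule rapid_sum_list) (use Cons in auto)
  show ?case using Top_add_kernel[OF _ r assms(2), of "f a" \<theta> x] Cons by simp
qed

lemma Top_unique:
  fixes K :: "int^'n::finite \<Rightarrow> complex^'s^'s"
  assumes "bilinear \<theta>" "\<And>xi. xi \<in> Hdom \<Longrightarrow> Top \<theta> K xi = (\<lambda>x. 0)"
  shows "K = (\<lambda>y. 0)"
proof
  fix x
  show "K x = 0"
  proof (subst matrix_eq, intro allI)
    fix s :: "complex^'s"
    define xi :: "int^'n \<Rightarrow> complex^'s" where "xi = (\<lambda>w. if w = 0 then s else 0)"
    have "xi \<in> Hdom" unfolding Hdom_def xi_def by (auto intro: rapid_fin_support)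
    then have "Top \<theta> K xi x = 0" using assms(2) by simp
    moreover have "Top \<theta> K xi x = ph \<theta> x (x - x) *s (K x *v xi (x - x))"
      unfolding Top_def using infsum_single_point[where f="\<lambda>y. ph \<theta> y (x - y) *s (K y *v xi (x - y))" and a=x]
      by (simp add: xi_def)
    ultimately show "K x *v s = 0 *v s" using assms(1) by (simp add: xi_def)
  qed
qed


definition cD :: "'n set \<Rightarrow> complex" where
  "cD Kset = \<i> powi (int (card Kset) - 1) * (2 * complex_of_real pi * \<i>)"

lemma mv_sum_left: "(sum f S) *v (v::complex^'s) = (\<Sum>i\<in>S. f i *v v)"
  by (induction S rule: infinite_finite_induct) (auto simp: matrix_vector_mult_add_rdistrib)

lemma mv_scaleR_left: "(r *\<^sub>R (M::complex^'s^'s)) *v v = complex_of_real r *s (M *v v)"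
  by (simp add: vec_eq_iff matrix_vector_mult_def sum_distrib_left mult.assoc del: vector_scaleR_component)

lemma gamma_expand:
  fixes \<gamma> :: "real^'n::finite \<Rightarrow> complex^'s^'s"
  assumes "linear \<gamma>"
  shows "\<gamma> v = (\<Sum>i\<in>UNIV. (v $ i) *\<^sub>R \<gamma> (axis i 1))"
proof -
  have "v = (\<Sum>i\<in>UNIV. (v $ i) *\<^sub>R axis i 1)"
    using basis_expansion[of v] by (simp add: scalar_mult_eq_scaleR)
  then have "\<gamma> v = \<gamma> (\<Sum>i\<in>UNIV. (v $ i) *\<^sub>R axis i 1)" by simp
  also have "\<dots> = (\<Sum>i\<in>UNIV. (v $ i) *\<^sub>R \<gamma> (axis i 1))"
    using assms by (simp add: linear_sum linear_scale)
  finally show ?thesis .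
qed

lemma Dirac_eq:
  fixes \<gamma> :: "real^'n::finite \<Rightarrow> complex^'s^'s"
  assumes "linear \<gamma>"
  shows "Dirac Kset \<gamma> xi x = cD Kset *s (\<gamma> (rv x) *v xi x)"
proof -
  have "\<gamma> (rv x) *v xi x = (\<Sum>i\<in>UNIV. complex_of_int (x $ i) *s (\<gamma> (axis i 1) *v xi x))"
    by (subst gamma_expand[OF assms]) (simp add: mv_sum_left mv_scaleR_left rv_nth del: vector_scaleR_component)
  then show ?thesis
    unfolding Dirac_def cD_def by (simp add: sum_cmul[symmetric] vector_smult_assoc mult_ac)
qed

lemma gamma_bound:
  fixes \<gamma> :: "real^'n::finite \<Rightarrow> complex^'s^'s"
  assumes "linear \<gamma>"
  obtains Kg where "0 \<le> Kg" "\<And>v. norm (\<gamma> v) \<le> Kg * norm v"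
proof -
  have "bounded_linear \<gamma>" using assms by (simp add: linear_conv_bounded_linear)
  then obtain Kg where "Kg > 0" "\<And>v. norm (\<gamma> v) \<le> norm v * Kg"
    using bounded_linear.pos_bounded by blast
  then show ?thesis using that[of Kg] by (auto simp: mult.commute)
qed

lemma Dxi_rapid:
  fixes \<gamma> :: "real^'n::finite \<Rightarrow> complex^'s^'s"
  assumes "linear \<gamma>" "rapid xi"
  shows "rapid (\<lambda>w. c *s (\<gamma> (rv w) *v xi w))"
proof -
  obtain Kg where Kg: "0 \<le> Kg" "\<And>v. norm (\<gamma> v) \<le> Kg * norm v" using gamma_bound[OF assms(1)] by blast
  show ?thesis
  proof (rule rapid_compare[OF assms(2), of "norm c * real CARD('s)^2 * Kg" _ 1])
    show "0 \<le> norm c * real CARD('s)^2 * Kg" using Kg by simp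
    fix w
    have "norm (c *s (\<gamma> (rv w) *v xi w)) = norm c * norm (\<gamma> (rv w) *v xi w)" by (simp add: norm_smul_vec)
    also have "\<dots> \<le> norm c * (real CARD('s)^2 * norm (\<gamma> (rv w)) * norm (xi w))"
      by (intro mult_left_mono norm_mv) simp
    also have "\<dots> \<le> norm c * (real CARD('s)^2 * (Kg * (1 + norm (rv w))) * norm (xi w))"
      by (intro mult_left_mono mult_right_mono order_trans[OF Kg(2)]) (auto simp: Kg(1))
    finally show "norm (c *s (\<gamma> (rv w) *v xi w)) \<le> norm c * real CARD('s)^2 * Kg * (1 + norm (rv w)) ^ 1 * norm (xi w)"
      by (simp add: mult_ac)
  qed
qed

lemma aI_rapid: "rapid a \<Longrightarrow> rapid (\<lambda>y. sm (a y) (mat 1 :: complex^'s^'s))"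
  by (rule rapid_scale_bound[of a _ "norm (mat 1 :: complex^'s^'s)"]) (auto simp: norm_sm mult.commute)

lemma cK_rapid:
  fixes \<gamma> :: "real^'n::finite \<Rightarrow> complex^'s^'s"
  assumes "linear \<gamma>" "rapid a"
  shows "rapid (\<lambda>y. sm (c * a y) (\<gamma> (rv y)))"
proof -
  obtain Kg where Kg: "0 \<le> Kg" "\<And>v. norm (\<gamma> v) \<le> Kg * norm v" using gamma_bound[OF assms(1)] by blast
  show ?thesis
  proof (rule rapid_compare[OF assms(2), of "norm c * Kg" _ 1])
    show "0 \<le> norm c * Kg" using Kg by simp
    fix y
    have "norm (sm (c * a y) (\<gamma> (rv y))) = norm c * norm (a y) * norm (\<gamma> (rv y))" by (simp add: norm_sm norm_mult)
    also have "\<dots> \<le> norm c * norm (a y) * (Kg * (1 + norm (rv y)))"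
      by (intro mult_left_mono order_trans[OF Kg(2)]) (auto simp: Kg(1))
    finally show "norm (sm (c * a y) (\<gamma> (rv y))) \<le> norm c * Kg * (1 + norm (rv y)) ^ 1 * norm (a y)"
      by (simp add: mult_ac)
  qed
qed

lemma commD_Top:
  fixes \<gamma> :: "real^'n::finite \<Rightarrow> complex^'s^'s"
  assumes th: "bilinear \<theta>" and g: "linear \<gamma>" and a: "rapid a" and xi: "rapid xi"
  shows "commD \<theta> Kset \<gamma> a xi = Top \<theta> (\<lambda>y. sm (cD Kset * a y) (\<gamma> (rv y))) xi"
proof
  fix x
  define c where "c = cD Kset"
  define Dxi where "Dxi = (\<lambda>w. c *s (\<gamma> (rv w) *v xi w))"
  have Dx: "rapid Dxi" unfolding Dxi_def by (rule Dxi_rapid[OF g xi])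
  have DD: "Dirac Kset \<gamma> f = (\<lambda>w. c *s (\<gamma> (rv w) *v f w))" for f
    by (rule ext) (simp add: Dirac_eq[OF g] c_def)
  have aI: "rapid (\<lambda>y. sm (a y) (mat 1 :: complex^'s^'s))" by (rule aI_rapid[OF a])
  let ?f = "\<lambda>y. ph \<theta> y (x - y) *s (sm (a y) (mat 1) *v xi (x - y))"
  let ?g = "\<lambda>y. ph \<theta> y (x - y) *s (sm (a y) (mat 1) *v Dxi (x - y))"
  have s1: "?f summable_on UNIV" by (rule top_summable[OF aI xi])
  have s2: "?g summable_on UNIV" by (rule top_summable[OF aI Dx])
  have bl: "bounded_linear (\<lambda>v. c *s (\<gamma> (rv x) *v v))"
    by (rule bounded_linear_compose[OF bl_smul bl_mv_right])
  have s1': "(\<lambda>y. c *s (\<gamma> (rv x) *v ?f y)) summable_on UNIV" by (rule summable_bl[OF bl s1])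
  have "commD \<theta> Kset \<gamma> a xi x = c *s (\<gamma> (rv x) *v infsum ?f UNIV) - infsum ?g UNIV"
    unfolding commD_def DD lmult_Top Dxi_def[symmetric] by (simp add: Top_def)
  also have "c *s (\<gamma> (rv x) *v infsum ?f UNIV) = infsum (\<lambda>y. c *s (\<gamma> (rv x) *v ?f y)) UNIV"
    by (rule infsum_bl[OF bl s1, symmetric])
  also have "infsum (\<lambda>y. c *s (\<gamma> (rv x) *v ?f y)) UNIV - infsum ?g UNIV
      = infsum (\<lambda>y. c *s (\<gamma> (rv x) *v ?f y) - ?g y) UNIV"
    by (rule infsum_diff'[OF s1' s2, symmetric])
  also have "\<dots> = Top \<theta> (\<lambda>y. sm (cD Kset * a y) (\<gamma> (rv y))) xi x"
    unfolding Top_def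
  proof (rule infsum_cong)
    fix y
    have G: "\<gamma> (rv x) - \<gamma> (rv (x - y)) = \<gamma> (rv y)"
      using g by (simp add: linear_diff[symmetric] rv_diff)
    have "c *s (\<gamma> (rv x) *v ?f y) - ?g y
        = (ph \<theta> y (x - y) * c * a y) *s (\<gamma> (rv x) *v xi (x - y)) - (ph \<theta> y (x - y) * c * a y) *s (\<gamma> (rv (x - y)) *v xi (x - y))"
      by (simp add: Dxi_def sm_mv vector_scalar_commute vector_smult_assoc mult_ac)
    also have "\<dots> = (ph \<theta> y (x - y) * c * a y) *s ((\<gamma> (rv x) - \<gamma> (rv (x - y))) *v xi (x - y))"
      by (simp add: vector_ssub_ldistrib matrix_vector_mult_diff_rdistrib)
    also have "\<dots> = ph \<theta> y (x - y) *s (sm (cD Kset * a y) (\<gamma> (rv y)) *v xi (x - y))"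
      by (simp add: G sm_mv vector_smult_assoc c_def mult_ac)
    finally show "c *s (\<gamma> (rv x) *v ?f y) - ?g y = ph \<theta> y (x - y) *s (sm (cD Kset * a y) (\<gamma> (rv y)) *v xi (x - y))" .
  qed
  finally show "commD \<theta> Kset \<gamma> a xi x = Top \<theta> (\<lambda>y. sm (cD Kset * a y) (\<gamma> (rv y))) xi x" .
qed


lemma prod_summable:
  fixes \<alpha> :: "'a \<Rightarrow> real" and \<beta> :: "'b \<Rightarrow> real"
  assumes "\<alpha> summable_on UNIV" "\<beta> summable_on UNIV" "\<And>y. 0 \<le> \<alpha> y" "\<And>w. 0 \<le> \<beta> w"
  shows "(\<lambda>(y, w). \<alpha> y * \<beta> w) summable_on UNIV"
proof -
  have "(\<lambda>(y, w). \<alpha> y * \<beta> w) summable_on Sigma UNIV (\<lambda>_. UNIV)"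
  proof (rule summable_on_SigmaI)
    show "((\<lambda>w. case (y, w) of (y, w) \<Rightarrow> \<alpha> y * \<beta> w) has_sum \<alpha> y * infsum \<beta> UNIV) UNIV" if "y \<in> UNIV" for y
      using has_sum_cmult_right[OF has_sum_infsum[OF assms(2)], of "\<alpha> y"] by simp
    show "(\<lambda>y. \<alpha> y * infsum \<beta> UNIV) summable_on UNIV"
      by (rule summable_on_cmult_left[OF assms(1)])
    show "\<And>x y. x \<in> UNIV \<Longrightarrow> y \<in> UNIV \<Longrightarrow> 0 \<le> (case (x, y) of (y, w) \<Rightarrow> \<alpha> y * \<beta> w)"
      using assms(3,4) by simp
  qed
  then show ?thesis by simp
qed

lemma Top_comp:
  fixes K :: "int^'n::finite \<Rightarrow> complex^'s^'s"
  assumes th: "bilinear \<theta>" and K: "rapid K" and L: "rapid L" and xi: "rapid xi"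
  shows "Top \<theta> K (Top \<theta> L xi) = Top \<theta> (conv \<theta> K L) xi"
proof
  fix x
  define F where "F = (\<lambda>(y, w). ph \<theta> y (x - y) *s (K y *v (ph \<theta> w (x - y - w) *s (L w *v xi (x - y - w)))))"
  have step1: "Top \<theta> K (Top \<theta> L xi) x = infsum (\<lambda>y. infsum (\<lambda>w. F (y, w)) UNIV) UNIV"
    unfolding Top_def
  proof (rule infsum_cong)
    fix y
    have bl: "bounded_linear (\<lambda>v. ph \<theta> y (x - y) *s (K y *v v))"
      by (rule bounded_linear_compose[OF bl_smul bl_mv_right])
    show "ph \<theta> y (x - y) *s (K y *v (\<Sum>\<^sub>\<infinity>ya. ph \<theta> ya (x - y - ya) *s (L ya *v xi (x - y - ya))))
        = (\<Sum>\<^sub>\<infinity>w. F (y, w))"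
      unfolding F_def by (simp add: infsum_bl[OF bl top_summable[OF L xi]])
  qed
  obtain C where C: "\<And>w. norm (xi w) \<le> C" using rapid_bounded[OF xi] by blast
  have C0: "0 \<le> C" using C[of 0] norm_ge_zero order_trans by blast
  define c where "c = real CARD('s)^2 * real CARD('s)^2 * C"
  have c0: "0 \<le> c" unfolding c_def using C0 by simp
  have Fs: "F summable_on UNIV"
  proof (rule summable_dom(1))
    show "(\<lambda>(y, w). (c * norm (K y)) * norm (L w)) summable_on UNIV"
      by (rule prod_summable) (auto intro!: summable_on_cmult_right rapid_norm_summable K L c0 mult_nonneg_nonneg)
    fix p :: "(int^'n) \<times> (int^'n)"
    obtain y w where p: "p = (y, w)" by fastforce
    have "norm (F p) = norm (K y *v (ph \<theta> w (x - y - w) *s (L w *v xi (x - y - w))))"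
      by (simp add: F_def p norm_smul_vec)
    also have "\<dots> \<le> real CARD('s)^2 * norm (K y) * norm (ph \<theta> w (x - y - w) *s (L w *v xi (x - y - w)))"
      by (rule norm_mv)
    also have "\<dots> = real CARD('s)^2 * norm (K y) * norm (L w *v xi (x - y - w))"
      by (simp add: norm_smul_vec)
    also have "\<dots> \<le> real CARD('s)^2 * norm (K y) * (real CARD('s)^2 * norm (L w) * norm (xi (x - y - w)))"
      by (intro mult_left_mono norm_mv) auto
    also have "\<dots> \<le> real CARD('s)^2 * norm (K y) * (real CARD('s)^2 * norm (L w) * C)"
      by (intro mult_left_mono C) auto
    also have "\<dots> = (case p of (y, w) \<Rightarrow> (c * norm (K y)) * norm (L w))"
      by (simp add: p c_def mult_ac)
    finally show "norm (F p) \<le> (case p of (y, w) \<Rightarrow> (c * norm (K y)) * norm (L w))" .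
  qed
  have step2: "infsum (\<lambda>y. infsum (\<lambda>w. F (y, w)) UNIV) UNIV = infsum F UNIV"
    using infsum_Sigma_banach[of F UNIV "\<lambda>_. UNIV"] Fs by simp
  define \<phi> :: "(int^'n) \<times> (int^'n) \<Rightarrow> (int^'n) \<times> (int^'n)" where "\<phi> = (\<lambda>(y, z). (y, z - y))"
  have bij: "bij_betw \<phi> UNIV UNIV"
    by (rule bij_betwI[of _ _ _ "\<lambda>(y, w). (y, w + y)"]) (auto simp: \<phi>_def)
  have step3: "infsum F UNIV = infsum (\<lambda>p. F (\<phi> p)) UNIV"
    by (rule infsum_reindex_bij_betw[OF bij, symmetric])
  have Fs2: "(\<lambda>p. F (\<phi> p)) summable_on UNIV"
    using summable_on_reindex_bij_betw[OF bij] Fs by blast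
  define G where "G y z = F (y, z - y)" for y z
  have Gs: "(\<lambda>(y, z). G y z) summable_on UNIV \<times> UNIV"
    using Fs2 by (simp add: G_def \<phi>_def case_prod_unfold)
  have step4: "infsum (\<lambda>p. F (\<phi> p)) UNIV = infsum (\<lambda>z. infsum (\<lambda>y. G y z) UNIV) UNIV"
  proof -
    have "infsum (\<lambda>p. F (\<phi> p)) UNIV = infsum (\<lambda>(y, z). G y z) (UNIV \<times> UNIV)"
      by (simp add: G_def \<phi>_def case_prod_unfold)
    also have "\<dots> = infsum (\<lambda>y. infsum (\<lambda>z. G y z) UNIV) UNIV"
      using infsum_Sigma_banach[of "\<lambda>(y, z). G y z" UNIV "\<lambda>_. UNIV"] Gs by simp
    also have "\<dots> = infsum (\<lambda>z. infsum (\<lambda>y. G y z) UNIV) UNIV"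
      by (rule infsum_swap_banach[OF Gs])
    finally show ?thesis .
  qed
  have step5: "Top \<theta> (conv \<theta> K L) xi x = infsum (\<lambda>z. infsum (\<lambda>y. G y z) UNIV) UNIV"
    unfolding Top_def
  proof (rule infsum_cong)
    fix z
    have bl: "bounded_linear (\<lambda>M::complex^'s^'s. ph \<theta> z (x - z) *s (M *v xi (x - z)))"
      by (rule bounded_linear_compose[OF bl_smul bl_mv_left])
    have "ph \<theta> z (x - z) *s (conv \<theta> K L z *v xi (x - z))
        = infsum (\<lambda>y. ph \<theta> z (x - z) *s (sm (ph \<theta> y (z - y)) (K y ** L (z - y)) *v xi (x - z))) UNIV"
      unfolding conv_def by (rule infsum_bl[OF bl conv_summable[OF K L], symmetric])
    also have "\<dots> = infsum (\<lambda>y. G y z) UNIV"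
    proof (rule infsum_cong)
      fix y
      have e: "x - y - (z - y) = x - z" by simp
      have "G y z = (ph \<theta> y (x - y) * ph \<theta> (z - y) (x - z)) *s ((K y ** L (z - y)) *v xi (x - z))"
        by (simp add: G_def F_def e vector_scalar_commute vector_smult_assoc matrix_vector_mul_assoc)
      also have "\<dots> = ph \<theta> z (x - z) *s (sm (ph \<theta> y (z - y)) (K y ** L (z - y)) *v xi (x - z))"
        by (simp add: ph_cocycle[OF th] sm_mv vector_smult_assoc)
      finally show "ph \<theta> z (x - z) *s (sm (ph \<theta> y (z - y)) (K y ** L (z - y)) *v xi (x - z)) = G y z" ..
    qed
    finally show "ph \<theta> z (x - z) *s (conv \<theta> K L z *v xi (x - z)) = infsum (\<lambda>y. G y z) UNIV" .
  qed
  show "Top \<theta> K (Top \<theta> L xi) x = Top \<theta> (conv \<theta> K L) xi x"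
    using step1 step2 step3 step4 step5 by simp
qed


definition sconv :: "(real^'n \<Rightarrow> real^'n \<Rightarrow> real) \<Rightarrow> (int^'n \<Rightarrow> complex) \<Rightarrow> (int^'n \<Rightarrow> complex) \<Rightarrow> int^'n \<Rightarrow> complex" where
  "sconv \<theta> a b z = infsum (\<lambda>y. ph \<theta> y (z - y) * a y * b (z - y)) UNIV"

lemma sconv_summable:
  fixes a :: "int^'n::finite \<Rightarrow> complex"
  assumes "rapid a" "rapid b"
  shows "(\<lambda>y. ph \<theta> y (z - y) * a y * b (z - y)) summable_on UNIV"
  by (rule gen_rapid(2)[OF assms, of 1 "\<lambda>z y. ph \<theta> y (z - y) * a y * b (z - y)"]) (auto simp: norm_mult)

lemma sconv_rapid:
  fixes a :: "int^'n::finite \<Rightarrow> complex"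
  assumes "rapid a" "rapid b"
  shows "rapid (sconv \<theta> a b)"
  unfolding sconv_def by (rule gen_rapid(1)[OF assms, of 1]) (auto simp: norm_mult)

lemma rapid_sm: "rapid a \<Longrightarrow> rapid (\<lambda>y. sm (a y) M)"
  by (rule rapid_scale_bound[of a _ "norm M"]) (auto simp: norm_sm mult.commute)

lemma conv_single:
  fixes a :: "int^'n::finite \<Rightarrow> complex" and M :: "complex^'s^'s"
  assumes "rapid a" "rapid b"
  shows "conv \<theta> (\<lambda>y. sm (a y) M) (\<lambda>y. sm (b y) N) = (\<lambda>z. sm (sconv \<theta> a b z) (M ** N))"
proof
  fix z
  have "conv \<theta> (\<lambda>y. sm (a y) M) (\<lambda>y. sm (b y) N) z
      = infsum (\<lambda>y. sm (ph \<theta> y (z - y) * a y * b (z - y)) (M ** N)) UNIV"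
    unfolding conv_def by (simp add: sm_mm_left sm_mm_right sm_mult mult_ac)
  also have "\<dots> = sm (sconv \<theta> a b z) (M ** N)"
    unfolding sconv_def by (rule infsum_bl[OF bl_sm_left sconv_summable[OF assms]])
  finally show "conv \<theta> (\<lambda>y. sm (a y) M) (\<lambda>y. sm (b y) N) z = sm (sconv \<theta> a b z) (M ** N)" .
qed

lemma matrix_add_rdistrib': "(A + B) ** (C::'a::semiring_1^'n^'n) = A ** C + B ** C"
  by (simp add: vec_eq_iff matrix_matrix_mult_def sum.distrib distrib_right)
lemma matrix_diff_rdistrib': "(A - B) ** (C::'a::ring_1^'n^'n) = A ** C - B ** C"
  by (simp add: vec_eq_iff matrix_matrix_mult_def sum_subtractf left_diff_distrib)
lemma matrix_diff_ldistrib': "(C::'a::ring_1^'n^'n) ** (A - B) = C ** A - C ** B"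
  by (simp add: vec_eq_iff matrix_matrix_mult_def sum_subtractf right_diff_distrib)
lemma matrix_neg_left': "(- A) ** (C::'a::ring_1^'n^'n) = - (A ** C)"
  by (simp add: vec_eq_iff matrix_matrix_mult_def sum_negf)
lemma mat_diff': "mat (a - b) = (mat a - mat b :: 'a::ab_group_add^'n^'n)"
  by (simp add: vec_eq_iff mat_def)
lemma mat_add': "mat (a + b) = (mat a + mat b :: 'a::monoid_add^'n^'n)"
  by (simp add: vec_eq_iff mat_def)
lemma mat_mm_left: "mat c ** (M::complex^'n^'n) = sm c M"
  by (simp add: vec_eq_iff matrix_matrix_mult_def mat_def if_distrib if_distribR sum.delta cong: if_cong)
lemma sm_sum_list_right: "sm c (sum_list (map f L)) = sum_list (map (\<lambda>w. sm c (f w)) L)"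
  by (induction L) (auto simp: sm_add_right)

lemma conv_add_left:
  fixes K1 :: "int^'n::finite \<Rightarrow> complex^'s^'s"
  assumes "rapid K1" "rapid K2" "rapid L"
  shows "conv \<theta> (\<lambda>y. K1 y + K2 y) L z = conv \<theta> K1 L z + conv \<theta> K2 L z"
  unfolding conv_def
  by (simp add: matrix_add_rdistrib' sm_add_right infsum_add[OF conv_summable[OF assms(1,3)] conv_summable[OF assms(2,3)]])

lemma conv_add_right:
  fixes K :: "int^'n::finite \<Rightarrow> complex^'s^'s"
  assumes "rapid K" "rapid L1" "rapid L2"
  shows "conv \<theta> K (\<lambda>y. L1 y + L2 y) z = conv \<theta> K L1 z + conv \<theta> K L2 z"
  unfolding conv_def
  by (simp add: matrix_add_ldistrib sm_add_right infsum_add[OF conv_summable[OF assms(1,2)] conv_summable[OF assms(1,3)]])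

lemma conv_zero_left: "conv \<theta> (\<lambda>y. 0) L = (\<lambda>z. 0)" by (simp add: conv_def fun_eq_iff)
lemma conv_zero_right: "conv \<theta> K (\<lambda>y. 0) = (\<lambda>z. 0)" by (simp add: conv_def fun_eq_iff)

lemma conv_sum_list_left:
  fixes f :: "'w \<Rightarrow> int^'n::finite \<Rightarrow> complex^'s^'s"
  assumes "\<And>w. w \<in> set Ls \<Longrightarrow> rapid (f w)" "rapid L"
  shows "conv \<theta> (\<lambda>y. sum_list (map (\<lambda>w. f w y) Ls)) L z = sum_list (map (\<lambda>w. conv \<theta> (f w) L z) Ls)"
  using assms(1)
proof (induction Ls)
  case Nil then show ?case by (simp add: conv_zero_left)
next
  case (Cons a Ls)
  have r: "rapid (\<lambda>y. sum_list (map (\<lambda>w. f w y) Ls))" by (rule rapid_sum_list) (use Cons in auto)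
  show ?case using conv_add_left[OF _ r assms(2), of "f a" \<theta> z] Cons by simp
qed

lemma conv_sum_list_right:
  fixes f :: "'w \<Rightarrow> int^'n::finite \<Rightarrow> complex^'s^'s"
  assumes "\<And>w. w \<in> set Ls \<Longrightarrow> rapid (f w)" "rapid K"
  shows "conv \<theta> K (\<lambda>y. sum_list (map (\<lambda>w. f w y) Ls)) z = sum_list (map (\<lambda>w. conv \<theta> K (f w) z) Ls)"
  using assms(1)
proof (induction Ls)
  case Nil then show ?case by (simp add: conv_zero_right)
next
  case (Cons a Ls)
  have r: "rapid (\<lambda>y. sum_list (map (\<lambda>w. f w y) Ls))" by (rule rapid_sum_list) (use Cons in auto)
  show ?case using conv_add_right[OF assms(2) _ r, of "f a" \<theta> z] Cons by simp
qed

lemma cliff_prod_append: "cliff_prod \<gamma> (xs @ ys) = cliff_prod \<gamma> xs ** cliff_prod \<gamma> ys"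
  by (induction xs) (auto simp: cliff_prod_def matrix_mul_assoc)

lemma cliff_prod_Cons: "cliff_prod \<gamma> (v # vs) = \<gamma> v ** cliff_prod \<gamma> vs"
  by (simp add: cliff_prod_def)

lemma cliff_prod_Nil: "cliff_prod \<gamma> [] = mat 1"
  by (simp add: cliff_prod_def)

definition gk :: "(real^'n \<Rightarrow> complex^'s^'s) \<Rightarrow> ((int^'n \<Rightarrow> complex) \<times> (real^'n) list) list \<Rightarrow> int^'n \<Rightarrow> complex^'s^'s" where
  "gk \<gamma> L = (\<lambda>y. sum_list (map (\<lambda>w. sm (fst w y) (cliff_prod \<gamma> (snd w))) L))"

definition PK :: "(real^'n \<Rightarrow> complex^'s^'s) \<Rightarrow> nat \<Rightarrow> (int^'n \<Rightarrow> complex^'s^'s) set" where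
  "PK \<gamma> k = {gk \<gamma> L | L. \<forall>w\<in>set L. fst w \<in> Atheta \<and> length (snd w) = k}"

lemma PK_rapid: "K \<in> PK \<gamma> k \<Longrightarrow> rapid K"
  unfolding PK_def gk_def Atheta_def by (auto intro!: rapid_sum_list rapid_sm)

lemma PK_zero: "(\<lambda>y. 0) \<in> PK \<gamma> k"
  unfolding PK_def gk_def by (rule CollectI, rule exI[of _ "[]"]) simp

lemma PK_add: "K1 \<in> PK \<gamma> k \<Longrightarrow> K2 \<in> PK \<gamma> k \<Longrightarrow> (\<lambda>y. K1 y + K2 y) \<in> PK \<gamma> k"
proof -
  assume "K1 \<in> PK \<gamma> k" "K2 \<in> PK \<gamma> k"
  then obtain L1 L2 where L: "K1 = gk \<gamma> L1" "K2 = gk \<gamma> L2"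
    "\<forall>w\<in>set L1. fst w \<in> Atheta \<and> length (snd w) = k" "\<forall>w\<in>set L2. fst w \<in> Atheta \<and> length (snd w) = k"
    unfolding PK_def by blast
  show ?thesis unfolding PK_def
    by (rule CollectI, rule exI[of _ "L1 @ L2"]) (use L in \<open>auto simp: gk_def\<close>)
qed

lemma PK_single: "a \<in> Atheta \<Longrightarrow> length ws = k \<Longrightarrow> (\<lambda>y. sm (a y) (cliff_prod \<gamma> ws)) \<in> PK \<gamma> k"
  unfolding PK_def gk_def by (rule CollectI, rule exI[of _ "[(a, ws)]"]) simp

lemma PK_sum_list: "(\<And>w. w \<in> set Ls \<Longrightarrow> f w \<in> PK \<gamma> k) \<Longrightarrow> (\<lambda>y. sum_list (map (\<lambda>w. f w y) Ls)) \<in> PK \<gamma> k"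
  by (induction Ls) (auto intro: PK_zero PK_add[of _ \<gamma> k, simplified])

lemma PK_sum: "finite S \<Longrightarrow> (\<And>j. j \<in> S \<Longrightarrow> f j \<in> PK \<gamma> k) \<Longrightarrow> (\<lambda>y. \<Sum>j\<in>S. f j y) \<in> PK \<gamma> k"
  by (induction S rule: finite_induct) (auto intro: PK_zero PK_add[of _ \<gamma> k, simplified])

lemma PK_scale_fun:
  assumes "K \<in> PK \<gamma> k" "\<And>a. a \<in> Atheta \<Longrightarrow> (\<lambda>y. p y * a y) \<in> Atheta"
  shows "(\<lambda>y. sm (p y) (K y)) \<in> PK \<gamma> k"
proof -
  obtain L where L: "K = gk \<gamma> L" "\<forall>w\<in>set L. fst w \<in> Atheta \<and> length (snd w) = k"
    using assms(1) unfolding PK_def by blast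
  show ?thesis unfolding PK_def
  proof (rule CollectI, rule exI[of _ "map (\<lambda>w. (\<lambda>y. p y * fst w y, snd w)) L"], intro conjI)
    show "(\<lambda>y. sm (p y) (K y)) = gk \<gamma> (map (\<lambda>w. (\<lambda>y. p y * fst w y, snd w)) L)"
      unfolding L(1) gk_def by (simp add: sm_sum_list_right sm_mult o_def)
    show "\<forall>w\<in>set (map (\<lambda>w. (\<lambda>y. p y * fst w y, snd w)) L). fst w \<in> Atheta \<and> length (snd w) = k"
      using L(2) assms(2) by auto
  qed
qed

lemma Atheta_const: "a \<in> Atheta \<Longrightarrow> (\<lambda>y. c * a y) \<in> Atheta"
  unfolding Atheta_def by (auto intro!: rapid_scale_bound[of a _ "norm c"] simp: norm_mult)

lemma PK_scale: "K \<in> PK \<gamma> k \<Longrightarrow> (\<lambda>y. sm c (K y)) \<in> PK \<gamma> k"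
  using PK_scale_fun[of K \<gamma> k "\<lambda>_. c"] Atheta_const by blast

lemma PK_neg: "K \<in> PK \<gamma> k \<Longrightarrow> (\<lambda>y. - K y) \<in> PK \<gamma> k"
  using PK_scale[of K \<gamma> k "-1"] by (simp add: sm_minus_left)

lemma PK_diff: "K1 \<in> PK \<gamma> k \<Longrightarrow> K2 \<in> PK \<gamma> k \<Longrightarrow> (\<lambda>y. K1 y - K2 y) \<in> PK \<gamma> k"
  using PK_add[OF _ PK_neg, of K1 \<gamma> k K2] by simp

lemma Atheta_coord: "a \<in> Atheta \<Longrightarrow> (\<lambda>y. complex_of_real (rv y $ i) * a y) \<in> Atheta"
  unfolding Atheta_def
proof (safe, rule rapid_compare[where f=a and c=1 and k=1])
  fix y assume "rapid a"
  have "\<bar>rv y $ i\<bar> \<le> norm (rv y)" by (rule component_le_norm_cart)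
  then show "norm (complex_of_real (rv y $ i) * a y) \<le> 1 * (1 + norm (rv y)) ^ 1 * norm (a y)"
    by (auto simp: norm_mult intro!: mult_right_mono)
qed auto

lemma PK_conv:
  fixes K :: "int^'n::finite \<Rightarrow> complex^'s^'s"
  assumes "K \<in> PK \<gamma> k1" "L \<in> PK \<gamma> k2"
  shows "conv \<theta> K L \<in> PK \<gamma> (k1 + k2)"
proof -
  obtain L1 where L1: "K = gk \<gamma> L1" "\<forall>w\<in>set L1. fst w \<in> Atheta \<and> length (snd w) = k1"
    using assms(1) unfolding PK_def by blast
  obtain L2 where L2: "L = gk \<gamma> L2" "\<forall>w\<in>set L2. fst w \<in> Atheta \<and> length (snd w) = k2"
    using assms(2) unfolding PK_def by blast
  have r1: "\<And>w. w \<in> set L1 \<Longrightarrow> rapid (\<lambda>y. sm (fst w y) (cliff_prod \<gamma> (snd w)))"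
    using L1(2) by (auto simp: Atheta_def intro: rapid_sm)
  have r2: "\<And>w. w \<in> set L2 \<Longrightarrow> rapid (\<lambda>y. sm (fst w y) (cliff_prod \<gamma> (snd w)))"
    using L2(2) by (auto simp: Atheta_def intro: rapid_sm)
  have rL: "rapid L" by (rule PK_rapid[OF assms(2)])
  have "conv \<theta> K L = (\<lambda>z. sum_list (map (\<lambda>w1. sum_list (map (\<lambda>w2.
       sm (sconv \<theta> (fst w1) (fst w2) z) (cliff_prod \<gamma> (snd w1 @ snd w2))) L2)) L1))"
  proof
    fix z
    have "conv \<theta> K L z = sum_list (map (\<lambda>w1. conv \<theta> (\<lambda>y. sm (fst w1 y) (cliff_prod \<gamma> (snd w1))) L z) L1)"
      unfolding L1(1) gk_def by (rule conv_sum_list_left[OF r1 rL])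
    also have "\<dots> = sum_list (map (\<lambda>w1. sum_list (map (\<lambda>w2.
       sm (sconv \<theta> (fst w1) (fst w2) z) (cliff_prod \<gamma> (snd w1 @ snd w2))) L2)) L1)"
    proof (rule arg_cong[where f=sum_list], rule map_cong[OF refl])
      fix w1 assume w1: "w1 \<in> set L1"
      have "conv \<theta> (\<lambda>y. sm (fst w1 y) (cliff_prod \<gamma> (snd w1))) L z
          = sum_list (map (\<lambda>w2. conv \<theta> (\<lambda>y. sm (fst w1 y) (cliff_prod \<gamma> (snd w1))) (\<lambda>y. sm (fst w2 y) (cliff_prod \<gamma> (snd w2))) z) L2)"
        unfolding L2(1) gk_def by (rule conv_sum_list_right[OF r2 r1[OF w1]])
      also have "\<dots> = sum_list (map (\<lambda>w2. sm (sconv \<theta> (fst w1) (fst w2) z) (cliff_prod \<gamma> (snd w1 @ snd w2))) L2)"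
      proof (rule arg_cong[where f=sum_list], rule map_cong[OF refl])
        fix w2 assume w2: "w2 \<in> set L2"
        show "conv \<theta> (\<lambda>y. sm (fst w1 y) (cliff_prod \<gamma> (snd w1))) (\<lambda>y. sm (fst w2 y) (cliff_prod \<gamma> (snd w2))) z
            = sm (sconv \<theta> (fst w1) (fst w2) z) (cliff_prod \<gamma> (snd w1 @ snd w2))"
          using L1(2) L2(2) w1 w2 by (simp add: conv_single Atheta_def cliff_prod_append)
      qed
      finally show "conv \<theta> (\<lambda>y. sm (fst w1 y) (cliff_prod \<gamma> (snd w1))) L z
          = sum_list (map (\<lambda>w2. sm (sconv \<theta> (fst w1) (fst w2) z) (cliff_prod \<gamma> (snd w1 @ snd w2))) L2)" .
    qed
    finally show "conv \<theta> K L z = sum_list (map (\<lambda>w1. sum_list (map (\<lambda>w2.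
       sm (sconv \<theta> (fst w1) (fst w2) z) (cliff_prod \<gamma> (snd w1 @ snd w2))) L2)) L1)" .
  qed
  also have "\<dots> \<in> PK \<gamma> (k1 + k2)"
  proof (rule PK_sum_list)
    fix w1 assume w1: "w1 \<in> set L1"
    show "(\<lambda>z. sum_list (map (\<lambda>w2. sm (sconv \<theta> (fst w1) (fst w2) z) (cliff_prod \<gamma> (snd w1 @ snd w2))) L2)) \<in> PK \<gamma> (k1 + k2)"
    proof (rule PK_sum_list)
      fix w2 assume w2: "w2 \<in> set L2"
      show "(\<lambda>z. sm (sconv \<theta> (fst w1) (fst w2) z) (cliff_prod \<gamma> (snd w1 @ snd w2))) \<in> PK \<gamma> (k1 + k2)"
        by (rule PK_single) (use L1(2) L2(2) w1 w2 in \<open>auto simp: Atheta_def intro: sconv_rapid\<close>)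
    qed
  qed
  finally show ?thesis .
qed


definition cK :: "'n set \<Rightarrow> (real^'n \<Rightarrow> complex^'s^'s) \<Rightarrow> (int^'n \<Rightarrow> complex) \<Rightarrow> int^'n \<Rightarrow> complex^'s^'s" where
  "cK Kset \<gamma> a = (\<lambda>y. sm (cD Kset * a y) (\<gamma> (rv y)))"

definition Xk :: "(real^'n \<Rightarrow> real^'n \<Rightarrow> real) \<Rightarrow> 'n set \<Rightarrow> (real^'n \<Rightarrow> complex^'s^'s)
    \<Rightarrow> (int^'n \<Rightarrow> complex) list \<Rightarrow> int^'n \<Rightarrow> complex^'s^'s" where
  "Xk \<theta> Kset \<gamma> as = foldr (\<lambda>a X. conv \<theta> (cK Kset \<gamma> a) X) as dI"

definition pfK where
  "pfK \<theta> Kset \<gamma> w = conv \<theta> (\<lambda>y. sm (fst w y) (mat 1)) (Xk \<theta> Kset \<gamma> (snd w))"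

definition pdfK where
  "pdfK \<theta> Kset \<gamma> w = Xk \<theta> Kset \<gamma> (fst w # snd w)"

definition bq :: "'n::finite set \<Rightarrow> real^'n \<Rightarrow> real^'n \<Rightarrow> real" where
  "bq Kset u v = qform Kset (u + v) - qform Kset u - qform Kset v"

definition eps :: "'n set \<Rightarrow> 'n \<Rightarrow> real" where
  "eps Kset i = (if i \<in> Kset then -1 else 1)"

lemma bq_expand: "bq Kset u v = (\<Sum>i\<in>UNIV. 2 * eps Kset i * u $ i * v $ i)"
  unfolding bq_def qform_def eps_def
  by (simp add: sum_subtractf[symmetric] power2_sum algebra_simps)

lemma Xk_Nil[simp]: "Xk \<theta> Kset \<gamma> [] = dI" by (simp add: Xk_def)
lemma Xk_Cons: "Xk \<theta> Kset \<gamma> (a # as) = conv \<theta> (cK Kset \<gamma> a) (Xk \<theta> Kset \<gamma> as)" by (simp add: Xk_def)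

lemma opsum_Top:
  assumes "\<And>w. w \<in> set L \<Longrightarrow> F w xi = Top \<theta> (Kf w) xi" "\<And>w. w \<in> set L \<Longrightarrow> rapid (Kf w)" "rapid xi"
  shows "opsum F L xi = Top \<theta> (\<lambda>y. sum_list (map (\<lambda>w. Kf w y) L)) xi"
proof
  fix x
  have "opsum F L xi x = sum_list (map (\<lambda>w. Top \<theta> (Kf w) xi x) L)"
    unfolding opsum_def by (intro arg_cong[where f=sum_list] map_cong refl) (simp add: assms(1))
  also have "\<dots> = Top \<theta> (\<lambda>y. sum_list (map (\<lambda>w. Kf w y) L)) xi x"
    by (rule Top_sum_list_kernel[symmetric]) (use assms in auto)
  finally show "opsum F L xi x = Top \<theta> (\<lambda>y. sum_list (map (\<lambda>w. Kf w y) L)) xi x" .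
qed

locale spin =
  fixes \<theta> :: "real^'n::finite \<Rightarrow> real^'n \<Rightarrow> real"
    and Kset :: "'n set"
    and \<gamma> :: "real^'n \<Rightarrow> complex^'s::finite^'s"
  assumes th: "bilinear \<theta>"
    and gl: "linear \<gamma>"
    and gc: "\<And>v. \<gamma> v ** \<gamma> v = mat (complex_of_real (qform Kset v))"
begin

lemma Gm_add: "\<gamma> (rv z) = \<gamma> (rv y) + \<gamma> (rv (z - y))"
  using gl by (simp add: rv_diff linear_add[symmetric])

lemma Gm_0: "\<gamma> 0 = 0" using gl by (rule linear_0)

lemma Gm_minus: "\<gamma> (- v) = - \<gamma> v" using gl by (rule linear_neg)

lemma anticomm: "\<gamma> u ** \<gamma> v + \<gamma> v ** \<gamma> u = mat (complex_of_real (bq Kset u v))"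
proof -
  have "\<gamma> (u + v) ** \<gamma> (u + v) = \<gamma> u ** \<gamma> u + (\<gamma> u ** \<gamma> v + \<gamma> v ** \<gamma> u) + \<gamma> v ** \<gamma> v"
    using gl by (simp add: linear_add matrix_add_ldistrib matrix_add_rdistrib' algebra_simps)
  then have "\<gamma> u ** \<gamma> v + \<gamma> v ** \<gamma> u = mat (complex_of_real (qform Kset (u + v))) - mat (complex_of_real (qform Kset u)) - mat (complex_of_real (qform Kset v))"
    using gc[of "u + v"] gc[of u] gc[of v] by (simp add: algebra_simps)
  then show ?thesis unfolding bq_def by (simp add: mat_diff')
qed

lemma cK_rapid': "a \<in> Atheta \<Longrightarrow> rapid (cK Kset \<gamma> a)"
  unfolding cK_def Atheta_def by (auto intro: cK_rapid[OF gl])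

lemma cK_PK: "a \<in> Atheta \<Longrightarrow> cK Kset \<gamma> a \<in> PK \<gamma> 1"
proof -
  assume a: "a \<in> Atheta"
  have "cK Kset \<gamma> a = (\<lambda>y. \<Sum>i\<in>UNIV. sm (cD Kset * complex_of_real (rv y $ i) * a y) (cliff_prod \<gamma> [axis i 1]))"
  proof
    fix y
    show "cK Kset \<gamma> a y = (\<Sum>i\<in>UNIV. sm (cD Kset * complex_of_real (rv y $ i) * a y) (cliff_prod \<gamma> [axis i 1]))"
      unfolding cK_def
      by (subst gamma_expand[OF gl]) (simp add: sm_sum_right sm_scaleR sm_mult cliff_prod_Cons cliff_prod_Nil mult_ac)
  qed
  also have "\<dots> \<in> PK \<gamma> 1"
  proof (rule PK_sum, simp)
    fix i
    have "(\<lambda>y. cD Kset * (complex_of_real (rv y $ i) * a y)) \<in> Atheta"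
      by (rule Atheta_const[OF Atheta_coord[OF a]])
    then show "(\<lambda>y. sm (cD Kset * complex_of_real (rv y $ i) * a y) (cliff_prod \<gamma> [axis i 1])) \<in> PK \<gamma> 1"
      using PK_single[of "\<lambda>y. cD Kset * (complex_of_real (rv y $ i) * a y)" "[axis i 1]" 1 \<gamma>]
      by (simp add: mult_ac)
  qed
  finally show ?thesis .
qed

lemma dI_PK: "dI \<in> PK \<gamma> 0"
proof -
  have "dI = (\<lambda>y. sm (if y = 0 then 1 else 0) (cliff_prod \<gamma> []))"
    by (auto simp: dI_def cliff_prod_Nil fun_eq_iff)
  also have "\<dots> \<in> PK \<gamma> 0"
    by (rule PK_single) (auto simp: Atheta_def intro: rapid_fin_support)
  finally show ?thesis .
qed

lemma Xk_PK: "set as \<subseteq> Atheta \<Longrightarrow> Xk \<theta> Kset \<gamma> as \<in> PK \<gamma> (length as)"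
proof (induction as)
  case Nil then show ?case by (simp add: dI_PK)
next
  case (Cons a as)
  then show ?case using PK_conv[OF cK_PK Cons.IH, of a \<theta>] by (simp add: Xk_Cons)
qed

lemma Xk_rapid: "set as \<subseteq> Atheta \<Longrightarrow> rapid (Xk \<theta> Kset \<gamma> as)"
  using Xk_PK PK_rapid by blast

lemma aI_PK: "a \<in> Atheta \<Longrightarrow> (\<lambda>y. sm (a y) (mat 1)) \<in> PK \<gamma> 0"
  using PK_single[of a "[]" 0 \<gamma>] by (simp add: cliff_prod_Nil)

lemma pfK_PK: "fst w \<in> Atheta \<Longrightarrow> set (snd w) \<subseteq> Atheta \<Longrightarrow> pfK \<theta> Kset \<gamma> w \<in> PK \<gamma> (length (snd w))"
  unfolding pfK_def using PK_conv[OF aI_PK Xk_PK, of "fst w" "snd w" \<theta>] by simp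

lemma pfK_rapid: "fst w \<in> Atheta \<Longrightarrow> set (snd w) \<subseteq> Atheta \<Longrightarrow> rapid (pfK \<theta> Kset \<gamma> w)"
  using pfK_PK PK_rapid by blast

lemma pdfK_rapid: "fst w \<in> Atheta \<Longrightarrow> set (snd w) \<subseteq> Atheta \<Longrightarrow> rapid (pdfK \<theta> Kset \<gamma> w)"
  unfolding pdfK_def by (rule Xk_rapid) auto

lemma foldr_Top:
  assumes "set as \<subseteq> Atheta" "xi \<in> Hdom"
  shows "foldr (\<lambda>a T. commD \<theta> Kset \<gamma> a \<circ> T) as id xi = Top \<theta> (Xk \<theta> Kset \<gamma> as) xi"
  using assms(1)
proof (induction as)
  case Nil
  then show ?case by (simp add: id_Top[OF th])
next
  case (Cons a as)
  have a: "rapid a" and as: "set as \<subseteq> Atheta" using Cons.prems by (auto simp: Atheta_def)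
  have xi: "rapid xi" using assms(2) by (simp add: Hdom_def)
  have r: "rapid (Top \<theta> (Xk \<theta> Kset \<gamma> as) xi)" by (rule top_rapid[OF Xk_rapid[OF as] xi])
  have "foldr (\<lambda>a T. commD \<theta> Kset \<gamma> a \<circ> T) (a # as) id xi = commD \<theta> Kset \<gamma> a (foldr (\<lambda>a T. commD \<theta> Kset \<gamma> a \<circ> T) as id xi)"
    by simp
  also have "\<dots> = commD \<theta> Kset \<gamma> a (Top \<theta> (Xk \<theta> Kset \<gamma> as) xi)"
    by (simp only: Cons.IH[OF as])
  also have "\<dots> = Top \<theta> (cK Kset \<gamma> a) (Top \<theta> (Xk \<theta> Kset \<gamma> as) xi)"
    unfolding cK_def by (rule commD_Top[OF th gl a r])
  also have "\<dots> = Top \<theta> (Xk \<theta> Kset \<gamma> (a # as)) xi"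
    unfolding Xk_Cons by (rule Top_comp[OF th cK_rapid'[of a] Xk_rapid[OF as] xi]) (use Cons.prems in auto)
  finally show ?case .
qed

lemma pi_form_Top:
  assumes "fst w \<in> Atheta" "set (snd w) \<subseteq> Atheta" "xi \<in> Hdom"
  shows "pi_form \<theta> Kset \<gamma> w xi = Top \<theta> (pfK \<theta> Kset \<gamma> w) xi"
proof -
  have xi: "rapid xi" using assms(3) by (simp add: Hdom_def)
  have "pi_form \<theta> Kset \<gamma> w xi = lmult \<theta> (fst w) (Top \<theta> (Xk \<theta> Kset \<gamma> (snd w)) xi)"
    unfolding pi_form_def using foldr_Top[OF assms(2,3)] by simp
  also have "\<dots> = Top \<theta> (\<lambda>y. sm (fst w y) (mat 1)) (Top \<theta> (Xk \<theta> Kset \<gamma> (snd w)) xi)"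
    by (rule lmult_Top)
  also have "\<dots> = Top \<theta> (pfK \<theta> Kset \<gamma> w) xi"
    unfolding pfK_def by (rule Top_comp[OF th aI_rapid Xk_rapid[OF assms(2)] xi]) (use assms(1) in \<open>simp add: Atheta_def\<close>)
  finally show ?thesis .
qed

lemma pi_dform_Top:
  assumes "fst w \<in> Atheta" "set (snd w) \<subseteq> Atheta" "xi \<in> Hdom"
  shows "pi_dform \<theta> Kset \<gamma> w xi = Top \<theta> (pdfK \<theta> Kset \<gamma> w) xi"
  unfolding pi_dform_def pdfK_def using foldr_Top[of "fst w # snd w" xi] assms by simp

lemma gamma_op_Top': "gamma_op \<theta> \<gamma> w xi = Top \<theta> (\<lambda>y. sm (fst w y) (cliff_prod \<gamma> (snd w))) xi"
  using gamma_op_Top[of \<theta> \<gamma> "fst w" "snd w" xi] by simp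

end


lemma sum_list_diff': "sum_list (map (\<lambda>w. f w - g w) L) = sum_list (map f L) - (sum_list (map g L) :: 'a::ab_group_add)"
  by (induction L) (auto simp: algebra_simps)

lemma qform_bound: "\<bar>qform Kset (v::real^'n::finite)\<bar> \<le> real CARD('n) * (1 + norm v)^2"
proof -
  have "\<bar>qform Kset v\<bar> \<le> (\<Sum>i\<in>UNIV. \<bar>(if i \<in> Kset then -1 else 1) * (v $ i)^2\<bar>)"
    unfolding qform_def by (rule sum_abs)
  also have "\<dots> \<le> (\<Sum>i\<in>(UNIV::'n set). (1 + norm v)^2)"
  proof (rule sum_mono)
    fix i
    have "\<bar>v $ i\<bar> \<le> 1 + norm v" using component_le_norm_cart[of v i] by linarith
    then have "(v $ i)^2 \<le> (1 + norm v)^2" by (metis abs_le_square_iff abs_of_nonneg add_nonneg_nonneg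
          norm_ge_zero zero_le_one power2_abs)
    then show "\<bar>(if i \<in> Kset then -1 else 1) * (v $ i)^2\<bar> \<le> (1 + norm v)^2" by auto
  qed
  finally show ?thesis by simp
qed

lemma Atheta_q: "a \<in> Atheta \<Longrightarrow> (\<lambda>y::int^'n::finite. complex_of_real (qform Kset (rv y)) * a y) \<in> Atheta"
  unfolding Atheta_def
proof (safe, rule rapid_compare[where f=a and c="real CARD('n)" and k=2])
  fix y :: "int^'n" assume "rapid a"
  show "norm (complex_of_real (qform Kset (rv y)) * a y) \<le> real CARD('n) * (1 + norm (rv y)) ^ 2 * norm (a y)"
    using qform_bound[of Kset "rv y"] by (auto simp: norm_mult intro!: mult_right_mono)
qed auto

context spin
begin

lemma GX_rapid: "rapid X \<Longrightarrow> rapid (\<lambda>w. sm c (\<gamma> (rv w) ** X w))"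
proof -
  assume X: "rapid X"
  obtain Kg where Kg: "0 \<le> Kg" "\<And>v. norm (\<gamma> v) \<le> Kg * norm v" using gamma_bound[OF gl] by blast
  show ?thesis
  proof (rule rapid_compare[OF X, of "norm c * real CARD('s)^3 * Kg" _ 1])
    show "0 \<le> norm c * real CARD('s)^3 * Kg" using Kg by simp
    fix w
    have "norm (sm c (\<gamma> (rv w) ** X w)) = norm c * norm (\<gamma> (rv w) ** X w)" by (simp add: norm_sm)
    also have "\<dots> \<le> norm c * (real CARD('s)^3 * norm (\<gamma> (rv w)) * norm (X w))"
      by (intro mult_left_mono norm_mm) simp
    also have "\<dots> \<le> norm c * (real CARD('s)^3 * (Kg * (1 + norm (rv w))) * norm (X w))"
      by (intro mult_left_mono mult_right_mono order_trans[OF Kg(2)]) (auto simp: Kg(1))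
    finally show "norm (sm c (\<gamma> (rv w) ** X w)) \<le> norm c * real CARD('s)^3 * Kg * (1 + norm (rv w)) ^ 1 * norm (X w)"
      by (simp add: mult_ac)
  qed
qed

lemma conv_cK_split:
  assumes a: "a \<in> Atheta" and X: "rapid X"
  shows "conv \<theta> (cK Kset \<gamma> a) X z = sm (cD Kset) (\<gamma> (rv z) ** conv \<theta> (\<lambda>y. sm (a y) (mat 1)) X z)
           - conv \<theta> (\<lambda>y. sm (a y) (mat 1)) (\<lambda>w. sm (cD Kset) (\<gamma> (rv w) ** X w)) z"
proof -
  define c where "c = cD Kset"
  have aI: "rapid (\<lambda>y. sm (a y) (mat 1 :: complex^'s^'s))" using a by (simp add: Atheta_def aI_rapid)
  let ?f = "\<lambda>y. sm (ph \<theta> y (z - y)) (sm (a y) (mat 1) ** X (z - y))"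
  let ?g = "\<lambda>y. sm (ph \<theta> y (z - y)) (sm (a y) (mat 1) ** sm c (\<gamma> (rv (z - y)) ** X (z - y)))"
  have s1: "?f summable_on UNIV" by (rule conv_summable[OF aI X])
  have s2: "?g summable_on UNIV" by (rule conv_summable[OF aI GX_rapid[OF X]])
  have bl: "bounded_linear (\<lambda>M. sm c (\<gamma> (rv z) ** M))"
    by (rule bounded_linear_compose[OF bl_sm bl_mm_right])
  have s1': "(\<lambda>y. sm c (\<gamma> (rv z) ** ?f y)) summable_on UNIV" by (rule summable_bl[OF bl s1])
  have "sm c (\<gamma> (rv z) ** conv \<theta> (\<lambda>y. sm (a y) (mat 1)) X z)
        - conv \<theta> (\<lambda>y. sm (a y) (mat 1)) (\<lambda>w. sm c (\<gamma> (rv w) ** X w)) z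
      = infsum (\<lambda>y. sm c (\<gamma> (rv z) ** ?f y)) UNIV - infsum ?g UNIV"
    unfolding conv_def by (simp add: infsum_bl[OF bl s1])
  also have "\<dots> = infsum (\<lambda>y. sm c (\<gamma> (rv z) ** ?f y) - ?g y) UNIV"
    by (rule infsum_diff'[OF s1' s2, symmetric])
  also have "\<dots> = conv \<theta> (cK Kset \<gamma> a) X z"
    unfolding conv_def
  proof (rule infsum_cong)
    fix y
    have "sm c (\<gamma> (rv z) ** ?f y) - ?g y
        = sm (c * ph \<theta> y (z - y) * a y) (\<gamma> (rv z) ** X (z - y)) - sm (c * ph \<theta> y (z - y) * a y) (\<gamma> (rv (z - y)) ** X (z - y))"
      by (simp add: sm_mm_left sm_mm_right sm_mult mult_ac)
    also have "\<dots> = sm (c * ph \<theta> y (z - y) * a y) ((\<gamma> (rv z) - \<gamma> (rv (z - y))) ** X (z - y))"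
      by (simp add: matrix_diff_rdistrib' sm_diff_right)
    also have "\<dots> = sm (ph \<theta> y (z - y)) (cK Kset \<gamma> a y ** X (z - y))"
      using Gm_add[of z y] by (simp add: cK_def sm_mm_left sm_mult c_def mult_ac)
    finally show "sm c (\<gamma> (rv z) ** ?f y) - ?g y = sm (ph \<theta> y (z - y)) (cK Kset \<gamma> a y ** X (z - y))" .
  qed
  finally show ?thesis unfolding c_def ..
qed

end


lemma sum_list_sm_mm: "sum_list (map (\<lambda>w. sm c (G ** f w)) L) = sm c (G ** sum_list (map f L))"
  by (induction L) (auto simp: sm_add_right matrix_add_ldistrib)

context spin
begin

lemma pointwise_id:
  fixes Y' :: "complex^'s^'s" and u v :: "real^'n"
  assumes zu: "\<gamma> zz = \<gamma> v + \<gamma> u"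
  shows "\<gamma> zz ** (\<gamma> v ** Y') = sm (complex_of_real (qform Kset v)) Y' + sm (complex_of_real (bq Kset u v)) Y' - \<gamma> v ** (\<gamma> u ** Y')"
proof -
  have e: "\<gamma> u ** \<gamma> v = mat (complex_of_real (bq Kset u v)) - \<gamma> v ** \<gamma> u"
    using anticomm[of u v] by (simp add: eq_diff_eq)
  have "\<gamma> zz ** (\<gamma> v ** Y') = (\<gamma> v ** \<gamma> v) ** Y' + (\<gamma> u ** \<gamma> v) ** Y'"
    by (simp add: zu matrix_add_rdistrib' matrix_mul_assoc)
  also have "\<dots> = sm (complex_of_real (qform Kset v)) Y' + (mat (complex_of_real (bq Kset u v)) - \<gamma> v ** \<gamma> u) ** Y'"
    by (simp add: gc mat_mm_left e)
  also have "\<dots> = sm (complex_of_real (qform Kset v)) Y' + sm (complex_of_real (bq Kset u v)) Y' - \<gamma> v ** (\<gamma> u ** Y')"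
    by (simp add: matrix_diff_rdistrib' mat_mm_left matrix_mul_assoc)
  finally show ?thesis .
qed

lemma GX_PK: "set as \<subseteq> Atheta \<Longrightarrow> as \<noteq> [] \<Longrightarrow> (\<lambda>z. \<gamma> (rv z) ** Xk \<theta> Kset \<gamma> as z) \<in> PK \<gamma> (length as - 1)"
proof (induction as)
  case Nil then show ?case by simp
next
  case (Cons a as')
  have a: "a \<in> Atheta" and as': "set as' \<subseteq> Atheta" using Cons.prems by auto
  define Y where "Y = Xk \<theta> Kset \<gamma> as'"
  define k where "k = length as'"
  have rY: "rapid Y" unfolding Y_def by (rule Xk_rapid[OF as'])
  have YPK: "Y \<in> PK \<gamma> k" unfolding Y_def k_def by (rule Xk_PK[OF as'])
  define c where "c = cD Kset"
  define A1 where "A1 = (\<lambda>y. sm (c * a y * complex_of_real (qform Kset (rv y))) (mat 1 :: complex^'s^'s))"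
  define B where "B i = (\<lambda>y. sm (2 * complex_of_real (eps Kset i) * c * complex_of_real (rv y $ i) * a y) (mat 1 :: complex^'s^'s))" for i
  define Yi where "Yi i = (\<lambda>w. sm (complex_of_real (rv w $ i)) (Y w))" for i
  define GY where "GY = (\<lambda>w. \<gamma> (rv w) ** Y w)"
  have A1a: "(\<lambda>y. c * a y * complex_of_real (qform Kset (rv y))) \<in> Atheta"
    using Atheta_const[OF Atheta_q[OF a, of Kset], of c] by (simp add: mult_ac)
  have Ba: "(\<lambda>y. 2 * complex_of_real (eps Kset i) * c * complex_of_real (rv y $ i) * a y) \<in> Atheta" for i
    using Atheta_const[OF Atheta_coord[OF a, of i], of "2 * complex_of_real (eps Kset i) * c"] by (simp add: mult_ac)
  have A1PK: "A1 \<in> PK \<gamma> 0" unfolding A1_def by (rule aI_PK[OF A1a])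
  have BPK: "B i \<in> PK \<gamma> 0" for i unfolding B_def by (rule aI_PK[OF Ba])
  have YiPK: "Yi i \<in> PK \<gamma> k" for i unfolding Yi_def by (rule PK_scale_fun[OF YPK Atheta_coord])
  have rA1: "rapid A1" by (rule PK_rapid[OF A1PK])
  have rB: "rapid (B i)" for i by (rule PK_rapid[OF BPK])
  have rYi: "rapid (Yi i)" for i by (rule PK_rapid[OF YiPK])
  have rGY: "rapid GY" unfolding GY_def using GX_rapid[OF rY, of 1] by simp
  have rcK: "rapid (cK Kset \<gamma> a)" by (rule cK_rapid'[OF a])
  have main: "\<gamma> (rv z) ** conv \<theta> (cK Kset \<gamma> a) Y z
      = conv \<theta> A1 Y z + (\<Sum>i\<in>UNIV. conv \<theta> (B i) (Yi i) z) - conv \<theta> (cK Kset \<gamma> a) GY z" for z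
  proof -
    let ?f = "\<lambda>y. sm (ph \<theta> y (z - y)) (cK Kset \<gamma> a y ** Y (z - y))"
    let ?P1 = "\<lambda>y. sm (ph \<theta> y (z - y)) (A1 y ** Y (z - y))"
    let ?P2 = "\<lambda>i y. sm (ph \<theta> y (z - y)) (B i y ** Yi i (z - y))"
    let ?P3 = "\<lambda>y. sm (ph \<theta> y (z - y)) (cK Kset \<gamma> a y ** GY (z - y))"
    have sf: "?f summable_on UNIV" by (rule conv_summable[OF rcK rY])
    have s1: "?P1 summable_on UNIV" by (rule conv_summable[OF rA1 rY])
    have s2: "?P2 i summable_on UNIV" for i by (rule conv_summable[OF rB rYi])
    have s3: "?P3 summable_on UNIV" by (rule conv_summable[OF rcK rGY])
    have s2': "(\<lambda>y. \<Sum>i\<in>UNIV. ?P2 i y) summable_on UNIV" by (rule infsum_sum'(2)) (auto intro: s2)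
    have "\<gamma> (rv z) ** conv \<theta> (cK Kset \<gamma> a) Y z = infsum (\<lambda>y. \<gamma> (rv z) ** ?f y) UNIV"
      unfolding conv_def by (rule infsum_bl[OF bl_mm_right sf, symmetric])
    also have "\<dots> = infsum (\<lambda>y. (?P1 y + (\<Sum>i\<in>UNIV. ?P2 i y)) - ?P3 y) UNIV"
    proof (rule infsum_cong)
      fix y
      define u where "u = rv (z - y)"
      define v where "v = rv y"
      define Y' where "Y' = Y (z - y)"
      define p where "p = ph \<theta> y (z - y)"
      have zu: "\<gamma> (rv z) = \<gamma> v + \<gamma> u" unfolding u_def v_def by (rule Gm_add)
      have L: "\<gamma> (rv z) ** ?f y = sm (p * c * a y) (\<gamma> (rv z) ** (\<gamma> v ** Y'))"
        by (simp add: cK_def sm_mm_left sm_mm_right sm_mult p_def c_def v_def Y'_def mult_ac)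
      have R1: "?P1 y = sm (p * c * a y * complex_of_real (qform Kset v)) Y'"
        by (simp add: A1_def sm_mm_left sm_mult p_def v_def Y'_def mult_ac)
      have R2: "(\<Sum>i\<in>UNIV. ?P2 i y) = sm (p * c * a y * complex_of_real (bq Kset u v)) Y'"
      proof -
        have "(\<Sum>i\<in>UNIV. ?P2 i y) = (\<Sum>i\<in>UNIV. sm (p * c * a y * complex_of_real (2 * eps Kset i * u $ i * v $ i)) Y')"
          by (rule sum.cong) (simp_all add: B_def Yi_def sm_mm_left sm_mult p_def u_def v_def Y'_def mult_ac)
        also have "\<dots> = sm (\<Sum>i\<in>UNIV. p * c * a y * complex_of_real (2 * eps Kset i * u $ i * v $ i)) Y'"
          by (simp add: sm_sum_left)
        also have "\<dots> = sm (p * c * a y * complex_of_real (bq Kset u v)) Y'"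
          by (simp add: bq_expand sum_distrib_left of_real_sum)
        finally show ?thesis .
      qed
      have R3: "?P3 y = sm (p * c * a y) (\<gamma> v ** (\<gamma> u ** Y'))"
        by (simp add: cK_def GY_def sm_mm_left sm_mult p_def c_def u_def v_def Y'_def mult_ac)
      show "\<gamma> (rv z) ** ?f y = (?P1 y + (\<Sum>i\<in>UNIV. ?P2 i y)) - ?P3 y"
        unfolding L R1 R2 R3 pointwise_id[OF zu]
        by (simp add: sm_add_right sm_diff_right sm_mult mult_ac)
    qed
    also have "\<dots> = (infsum ?P1 UNIV + infsum (\<lambda>y. \<Sum>i\<in>UNIV. ?P2 i y) UNIV) - infsum ?P3 UNIV"
      by (simp add: infsum_diff'[OF summable_on_add[OF s1 s2'] s3] infsum_add[OF s1 s2'])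
    also have "infsum (\<lambda>y. \<Sum>i\<in>UNIV. ?P2 i y) UNIV = (\<Sum>i\<in>UNIV. infsum (?P2 i) UNIV)"
      by (rule infsum_sum'(1)) (auto intro: s2)
    finally show ?thesis unfolding conv_def .
  qed
  have GYPK: "conv \<theta> (cK Kset \<gamma> a) GY \<in> PK \<gamma> k"
  proof (cases "as' = []")
    case True
    then have "GY = (\<lambda>w. 0)" by (auto simp: GY_def Y_def dI_def fun_eq_iff Gm_0)
    then show ?thesis by (simp add: conv_zero_right PK_zero)
  next
    case False
    have "GY \<in> PK \<gamma> (k - 1)" unfolding GY_def Y_def k_def by (rule Cons.IH[OF as' False])
    from PK_conv[OF cK_PK[OF a] this, of \<theta>] show ?thesis using False by (simp add: k_def)
  qed
  have "(\<lambda>z. conv \<theta> A1 Y z + (\<Sum>i\<in>UNIV. conv \<theta> (B i) (Yi i) z) - conv \<theta> (cK Kset \<gamma> a) GY z) \<in> PK \<gamma> k"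
  proof (rule PK_diff[OF _ GYPK], rule PK_add)
    show "conv \<theta> A1 Y \<in> PK \<gamma> k" using PK_conv[OF A1PK YPK, of \<theta>] by simp
    show "(\<lambda>y. \<Sum>i\<in>UNIV. conv \<theta> (B i) (Yi i) y) \<in> PK \<gamma> k"
      by (rule PK_sum) (use PK_conv[OF BPK YiPK, of \<theta>] in simp_all)
  qed
  then show ?case unfolding Xk_Cons Y_def[symmetric] main[symmetric] k_def by simp
qed

lemma junk_PK:
  assumes L: "\<forall>w\<in>set L. fst w \<in> Atheta \<and> set (snd w) \<subseteq> Atheta \<and> length (snd w) = Suc k"
    and J: "(\<lambda>y. sum_list (map (\<lambda>w. pfK \<theta> Kset \<gamma> w y) L)) = (\<lambda>y. 0)"
  shows "(\<lambda>y. sum_list (map (\<lambda>w. pdfK \<theta> Kset \<gamma> w y) L)) \<in> PK \<gamma> k"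
proof -
  define GXw where "GXw (w :: (int^'n \<Rightarrow> complex) \<times> (int^'n \<Rightarrow> complex) list) = (\<lambda>w'. sm (cD Kset) (\<gamma> (rv w') ** Xk \<theta> Kset \<gamma> (snd w) w'))" for w
  have split: "pdfK \<theta> Kset \<gamma> w z = sm (cD Kset) (\<gamma> (rv z) ** pfK \<theta> Kset \<gamma> w z)
      - conv \<theta> (\<lambda>y. sm (fst w y) (mat 1)) (GXw w) z" if "w \<in> set L" for w z
  proof -
    have "fst w \<in> Atheta" "set (snd w) \<subseteq> Atheta" using L that by auto
    then show ?thesis unfolding pdfK_def pfK_def GXw_def Xk_Cons
      by (rule conv_cK_split[OF _ Xk_rapid])
  qed
  have "(\<lambda>z. sum_list (map (\<lambda>w. pdfK \<theta> Kset \<gamma> w z) L))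
      = (\<lambda>z. - sum_list (map (\<lambda>w. conv \<theta> (\<lambda>y. sm (fst w y) (mat 1)) (GXw w) z) L))"
  proof
    fix z
    have "sum_list (map (\<lambda>w. pdfK \<theta> Kset \<gamma> w z) L)
        = sum_list (map (\<lambda>w. sm (cD Kset) (\<gamma> (rv z) ** pfK \<theta> Kset \<gamma> w z)
           - conv \<theta> (\<lambda>y. sm (fst w y) (mat 1)) (GXw w) z) L)"
      by (intro arg_cong[where f=sum_list] map_cong refl) (simp add: split)
    also have "\<dots> = sm (cD Kset) (\<gamma> (rv z) ** sum_list (map (\<lambda>w. pfK \<theta> Kset \<gamma> w z) L))
        - sum_list (map (\<lambda>w. conv \<theta> (\<lambda>y. sm (fst w y) (mat 1)) (GXw w) z) L)"
      by (simp add: sum_list_diff' sum_list_sm_mm)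
    also have "sum_list (map (\<lambda>w. pfK \<theta> Kset \<gamma> w z) L) = 0" using fun_cong[OF J, of z] by simp
    finally show "sum_list (map (\<lambda>w. pdfK \<theta> Kset \<gamma> w z) L)
      = - sum_list (map (\<lambda>w. conv \<theta> (\<lambda>y. sm (fst w y) (mat 1)) (GXw w) z) L)" by simp
  qed
  also have "\<dots> \<in> PK \<gamma> k"
  proof (rule PK_neg, rule PK_sum_list)
    fix w assume w: "w \<in> set L"
    have a: "fst w \<in> Atheta" and as: "set (snd w) \<subseteq> Atheta" and ln: "length (snd w) = Suc k" using L w by auto
    have "GXw w \<in> PK \<gamma> k" unfolding GXw_def
      using PK_scale[OF GX_PK[OF as], of "cD Kset"] ln by (cases "snd w") auto
    then show "conv \<theta> (\<lambda>y. sm (fst w y) (mat 1)) (GXw w) \<in> PK \<gamma> k"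
      using PK_conv[OF aI_PK[OF a], of "GXw w" k \<theta>] by simp
  qed
  finally show ?thesis .
qed

end


definition uu :: "int^'n \<Rightarrow> int^'n \<Rightarrow> complex" where
  "uu y0 = (\<lambda>y. if y = y0 then 1 else 0)"

fun cs :: "(real^'n \<Rightarrow> real^'n \<Rightarrow> real) \<Rightarrow> 'n set \<Rightarrow> (int^'n) list \<Rightarrow> complex" where
  "cs \<theta> Kset [] = 1"
| "cs \<theta> Kset (y # ys) = cD Kset * ph \<theta> y (sum_list ys) * cs \<theta> Kset ys"

definition pre :: "(real^'n \<Rightarrow> real^'n \<Rightarrow> real) \<Rightarrow> 'n set \<Rightarrow> (int^'n) list \<Rightarrow> (int^'n \<Rightarrow> complex) \<Rightarrow> int^'n \<Rightarrow> complex" where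
  "pre \<theta> Kset ys h = (\<lambda>w. inverse (ph \<theta> w (sum_list ys) * cs \<theta> Kset ys) * h (w + sum_list ys))"

lemma cD_nonzero: "cD Kset \<noteq> 0"
  by (simp add: cD_def)

lemma cs_nonzero: "cs \<theta> Kset ys \<noteq> 0"
  by (induction ys) (auto simp: cD_nonzero)

lemma rapid_point: "rapid (\<lambda>y. if y = y0 then c else 0)"
  unfolding rapid_def
proof
  fix p
  show "\<exists>C. \<forall>y. (1 + norm (rv y)) ^ p * norm (if y = y0 then c else 0) \<le> C"
    by (rule exI[of _ "(1 + norm (rv y0)) ^ p * norm c"]) auto
qed

lemma uu_Atheta: "uu y0 \<in> Atheta"
  unfolding Atheta_def uu_def by (simp add: rapid_point)

lemma rapid_shift:
  fixes g :: "int^'n::finite \<Rightarrow> complex"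
  assumes g: "rapid g" and B: "\<And>w. norm (c w) \<le> B"
  shows "rapid (\<lambda>w. c w * g (w + S))"
  unfolding rapid_def
proof
  fix p
  obtain C where C: "\<And>v. (1 + norm (rv v))^p * norm (g v) \<le> C" using rapidD[OF g] by blast
  have B0: "0 \<le> B" using B[of 0] norm_ge_zero order_trans by blast
  show "\<exists>C'. \<forall>w. (1 + norm (rv w)) ^ p * norm (c w * g (w + S)) \<le> C'"
  proof (intro exI allI)
    fix w
    have wp: "(1 + norm (rv w))^p \<le> (1 + norm (rv (- S)))^p * (1 + norm (rv (w + S)))^p"
      using weight_pow[of w p "- S"] by simp
    have "(1 + norm (rv w)) ^ p * norm (c w * g (w + S)) \<le> ((1 + norm (rv (- S)))^p * (1 + norm (rv (w + S)))^p) * (B * norm (g (w + S)))"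
      by (intro mult_mono wp) (auto simp: norm_mult intro: mult_right_mono B)
    also have "\<dots> = B * (1 + norm (rv (- S)))^p * ((1 + norm (rv (w + S)))^p * norm (g (w + S)))"
      by (simp add: mult_ac)
    also have "\<dots> \<le> B * (1 + norm (rv (- S)))^p * C"
      by (intro mult_left_mono C) (simp add: B0)
    finally show "(1 + norm (rv w)) ^ p * norm (c w * g (w + S)) \<le> B * (1 + norm (rv (- S)))^p * C" .
  qed
qed

lemma pre_Atheta: "h \<in> Atheta \<Longrightarrow> pre \<theta> Kset ys h \<in> Atheta"
  unfolding pre_def Atheta_def
  by (auto intro!: rapid_shift[where B="inverse (norm (cs \<theta> Kset ys))"] simp: norm_mult norm_inverse)

context spin
begin

lemma cK_uu: "cK Kset \<gamma> (uu y0) = (\<lambda>y. if y = y0 then sm (cD Kset) (\<gamma> (rv y0)) else 0)"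
  by (auto simp: cK_def uu_def fun_eq_iff)

lemma conv_point_left:
  "conv \<theta> (\<lambda>y. if y = y0 then M else 0) X z = sm (ph \<theta> y0 (z - y0)) (M ** X (z - y0))"
  unfolding conv_def
  using infsum_single_point[where f="\<lambda>y. sm (ph \<theta> y (z - y)) ((if y = y0 then M else 0) ** X (z - y))" and a=y0]
  by simp

lemma Xk_uu: "Xk \<theta> Kset \<gamma> (map uu ys) = (\<lambda>z. if z = sum_list ys then sm (cs \<theta> Kset ys) (cliff_prod \<gamma> (map rv ys)) else 0)"
proof (induction ys)
  case Nil
  then show ?case by (auto simp: dI_def cliff_prod_Nil fun_eq_iff)
next
  case (Cons y ys)
  show ?case
  proof
    fix z
    have "Xk \<theta> Kset \<gamma> (map uu (y # ys)) z = sm (ph \<theta> y (z - y)) (sm (cD Kset) (\<gamma> (rv y)) ** Xk \<theta> Kset \<gamma> (map uu ys) (z - y))"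
      by (simp add: Xk_Cons cK_uu conv_point_left)
    also have "\<dots> = (if z = sum_list (y # ys) then sm (cs \<theta> Kset (y # ys)) (cliff_prod \<gamma> (map rv (y # ys))) else 0)"
      unfolding Cons.IH by (auto simp: cliff_prod_Cons sm_mm_left sm_mm_right sm_mult mult_ac algebra_simps)
    finally show "Xk \<theta> Kset \<gamma> (map uu (y # ys)) z = (if z = sum_list (y # ys) then sm (cs \<theta> Kset (y # ys)) (cliff_prod \<gamma> (map rv (y # ys))) else 0)" .
  qed
qed

lemma conv_Xk_uu:
  "conv \<theta> K (Xk \<theta> Kset \<gamma> (map uu ys)) z
     = sm (ph \<theta> (z - sum_list ys) (sum_list ys) * cs \<theta> Kset ys) (K (z - sum_list ys) ** cliff_prod \<gamma> (map rv ys))"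
proof -
  let ?S = "sum_list ys"
  have key: "\<And>y. (z - y = ?S) = (y = z - ?S)" by (auto simp: diff_eq_eq eq_diff_eq add.commute)
  have "conv \<theta> K (Xk \<theta> Kset \<gamma> (map uu ys)) z
      = sm (ph \<theta> (z - ?S) (z - (z - ?S))) (K (z - ?S) ** Xk \<theta> Kset \<gamma> (map uu ys) (z - (z - ?S)))"
    unfolding conv_def
    by (rule infsum_single_point[where f="\<lambda>y. sm (ph \<theta> y (z - y)) (K y ** Xk \<theta> Kset \<gamma> (map uu ys) (z - y))"])
       (auto simp: Xk_uu key)
  also have "\<dots> = sm (ph \<theta> (z - ?S) ?S * cs \<theta> Kset ys) (K (z - ?S) ** cliff_prod \<gamma> (map rv ys))"
    by (simp add: Xk_uu sm_mm_right sm_mult)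
  finally show ?thesis .
qed

lemma pre_pfK: "pfK \<theta> Kset \<gamma> (pre \<theta> Kset ys h, map uu ys) = (\<lambda>z. sm (h z) (cliff_prod \<gamma> (map rv ys)))"
proof
  fix z
  have ne: "ph \<theta> (z - sum_list ys) (sum_list ys) * cs \<theta> Kset ys \<noteq> 0" by (simp add: cs_nonzero)
  show "pfK \<theta> Kset \<gamma> (pre \<theta> Kset ys h, map uu ys) z = sm (h z) (cliff_prod \<gamma> (map rv ys))"
    unfolding pfK_def using ne
    by (simp add: conv_Xk_uu sm_mm_left sm_mult pre_def field_simps)
qed

lemma pre_pdfK: "pdfK \<theta> Kset \<gamma> (pre \<theta> Kset ys h, map uu ys)
   = (\<lambda>z. sm (cD Kset * h z) (\<gamma> (rv (z - sum_list ys)) ** cliff_prod \<gamma> (map rv ys)))"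
proof
  fix z
  have ne: "ph \<theta> (z - sum_list ys) (sum_list ys) * cs \<theta> Kset ys \<noteq> 0" by (simp add: cs_nonzero)
  show "pdfK \<theta> Kset \<gamma> (pre \<theta> Kset ys h, map uu ys) z = sm (cD Kset * h z) (\<gamma> (rv (z - sum_list ys)) ** cliff_prod \<gamma> (map rv ys))"
    unfolding pdfK_def using ne
    by (simp add: Xk_Cons conv_Xk_uu cK_def sm_mm_left sm_mult pre_def field_simps)
qed

end


definition CS :: "(real^'n \<Rightarrow> complex^'s^'s) \<Rightarrow> nat \<Rightarrow> (complex^'s^'s) set" where
  "CS \<gamma> m = {sum_list (map (\<lambda>e. sm (fst e) (cliff_prod \<gamma> (map rv (snd e)))) E) | E :: (complex \<times> (int^'n) list) list.
      \<forall>e\<in>set E. length (snd e) = m}"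

lemma CS_zero: "0 \<in> CS \<gamma> m"
  unfolding CS_def by (rule CollectI, rule exI[of _ "[]"]) simp

lemma CS_add:
  fixes \<gamma> :: "real^'n::finite \<Rightarrow> complex^'s^'s"
  shows "A \<in> CS \<gamma> m \<Longrightarrow> B \<in> CS \<gamma> m \<Longrightarrow> A + B \<in> CS \<gamma> m"
proof -
  assume "A \<in> CS \<gamma> m" "B \<in> CS \<gamma> m"
  then obtain E1 E2 :: "(complex \<times> (int^'n) list) list" where
    "A = sum_list (map (\<lambda>e. sm (fst e) (cliff_prod \<gamma> (map rv (snd e)))) E1)" "\<forall>e\<in>set E1. length (snd e) = m"
    "B = sum_list (map (\<lambda>e. sm (fst e) (cliff_prod \<gamma> (map rv (snd e)))) E2)" "\<forall>e\<in>set E2. length (snd e) = m"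
    unfolding CS_def by blast
  then show ?thesis unfolding CS_def by (intro CollectI exI[of _ "E1 @ E2"]) auto
qed

lemma CS_sum: "finite S \<Longrightarrow> (\<And>i. i \<in> S \<Longrightarrow> f i \<in> CS \<gamma> m) \<Longrightarrow> sum f S \<in> CS \<gamma> m"
  by (induction S rule: finite_induct) (auto intro: CS_zero CS_add)

lemma CS_scale:
  fixes \<gamma> :: "real^'n::finite \<Rightarrow> complex^'s^'s"
  shows "A \<in> CS \<gamma> m \<Longrightarrow> sm c A \<in> CS \<gamma> m"
proof -
  assume "A \<in> CS \<gamma> m"
  then obtain E :: "(complex \<times> (int^'n) list) list" where
    E: "A = sum_list (map (\<lambda>e. sm (fst e) (cliff_prod \<gamma> (map rv (snd e)))) E)" "\<forall>e\<in>set E. length (snd e) = m"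
    unfolding CS_def by blast
  show ?thesis unfolding CS_def
    by (intro CollectI exI[of _ "map (\<lambda>e. (c * fst e, snd e)) E"])
       (use E in \<open>auto simp: sm_sum_list_right sm_mult o_def\<close>)
qed

lemma CS_axis:
  fixes \<gamma> :: "real^'n::finite \<Rightarrow> complex^'s^'s"
  shows "A \<in> CS \<gamma> m \<Longrightarrow> \<gamma> (axis i 1) ** A \<in> CS \<gamma> (Suc m)"
proof -
  assume "A \<in> CS \<gamma> m"
  then obtain E :: "(complex \<times> (int^'n) list) list" where
    E: "A = sum_list (map (\<lambda>e. sm (fst e) (cliff_prod \<gamma> (map rv (snd e)))) E)" "\<forall>e\<in>set E. length (snd e) = m"
    unfolding CS_def by blast
  have d: "G ** sum_list (map f E) = sum_list (map (\<lambda>e. G ** f e) E)" for G :: "complex^'s^'s" and f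
    by (induction E) (auto simp: matrix_add_ldistrib)
  show ?thesis unfolding CS_def
    by (intro CollectI exI[of _ "map (\<lambda>e. (fst e, axis i 1 # snd e)) E"])
       (use E in \<open>auto simp: d o_def sm_mm_right cliff_prod_Cons rv_axis\<close>)
qed

lemma CS_mat1: "mat 1 \<in> CS \<gamma> 0"
  unfolding CS_def by (intro CollectI exI[of _ "[(1, [])]"]) (auto simp: cliff_prod_Nil)

lemma mm_sum_left: "sum f S ** (C::complex^'s^'s) = (\<Sum>i\<in>S. f i ** C)"
  by (induction S rule: infinite_finite_induct) (auto simp: matrix_add_rdistrib')

context spin
begin

lemma CS_gamma: "A \<in> CS \<gamma> m \<Longrightarrow> \<gamma> v ** A \<in> CS \<gamma> (Suc m)"
proof -
  assume A: "A \<in> CS \<gamma> m"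
  have "\<gamma> v ** A = (\<Sum>i\<in>UNIV. sm (complex_of_real (v $ i)) (\<gamma> (axis i 1) ** A))"
    by (subst gamma_expand[OF gl]) (simp add: mm_sum_left sm_scaleR sm_mm_left)
  also have "\<dots> \<in> CS \<gamma> (Suc m)"
    by (rule CS_sum) (auto intro: CS_scale CS_axis A)
  finally show ?thesis .
qed

lemma cliff_CS: "cliff_prod \<gamma> vs \<in> CS \<gamma> (length vs)"
  by (induction vs) (auto simp: cliff_prod_Nil cliff_prod_Cons intro: CS_mat1 CS_gamma)

lemma PK_closure:
  assumes Z: "(\<lambda>y. 0) \<in> Q" and A: "\<And>K1 K2. K1 \<in> Q \<Longrightarrow> K2 \<in> Q \<Longrightarrow> (\<lambda>y. K1 y + K2 y) \<in> Q"
    and S: "\<And>g ys. g \<in> Atheta \<Longrightarrow> length ys = k \<Longrightarrow> (\<lambda>z. sm (g z) (cliff_prod \<gamma> (map rv ys))) \<in> Q"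
    and K: "K \<in> PK \<gamma> k"
  shows "K \<in> Q"
proof -
  have QS: "(\<And>w. w \<in> set Ls \<Longrightarrow> f w \<in> Q) \<Longrightarrow> (\<lambda>y. sum_list (map (\<lambda>w. f w y) Ls)) \<in> Q" for Ls and f :: "'w \<Rightarrow> int^'n \<Rightarrow> complex^'s^'s"
    by (induction Ls) (auto intro: Z A[of _ _, simplified])
  obtain L where L: "K = gk \<gamma> L" "\<forall>w\<in>set L. fst w \<in> Atheta \<and> length (snd w) = k"
    using K unfolding PK_def by blast
  have one: "(\<lambda>y. sm (fst w y) (cliff_prod \<gamma> (snd w))) \<in> Q" if w: "w \<in> set L" for w
  proof -
    have "cliff_prod \<gamma> (snd w) \<in> CS \<gamma> k" using cliff_CS[of "snd w"] L(2) w by simp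
    then obtain E :: "(complex \<times> (int^'n) list) list" where
      E: "cliff_prod \<gamma> (snd w) = sum_list (map (\<lambda>e. sm (fst e) (cliff_prod \<gamma> (map rv (snd e)))) E)" "\<forall>e\<in>set E. length (snd e) = k"
      unfolding CS_def by blast
    have "(\<lambda>y. sm (fst w y) (cliff_prod \<gamma> (snd w))) = (\<lambda>y. sum_list (map (\<lambda>e. sm (fst e * fst w y) (cliff_prod \<gamma> (map rv (snd e)))) E))"
      by (simp add: E(1) sm_sum_list_right sm_mult mult_ac)
    also have "\<dots> \<in> Q"
    proof (rule QS)
      fix e assume e: "e \<in> set E"
      show "(\<lambda>y. sm (fst e * fst w y) (cliff_prod \<gamma> (map rv (snd e)))) \<in> Q"
        by (rule S) (use Atheta_const L(2) w E(2) e in auto)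
    qed
    finally show ?thesis .
  qed
  show ?thesis unfolding L(1) gk_def by (rule QS) (rule one)
qed

end


lemma qform_axis: "qform Kset (axis i 1 :: real^'n::finite) = (if i \<in> Kset then -1 else 1)"
proof -
  have "qform Kset (axis i 1 :: real^'n) = (\<Sum>j\<in>UNIV. if j = i then (if i \<in> Kset then -1 else 1) else 0)"
    unfolding qform_def by (rule sum.cong) (auto simp: axis_def)
  also have "\<dots> = (if i \<in> Kset then -1 else 1)" by simp
  finally show ?thesis .
qed

lemma matrix_neg_right': "(C::'a::ring_1^'n^'n) ** (- A) = - (C ** A)"
  by (simp add: vec_eq_iff matrix_matrix_mult_def sum_negf)

lemma grp_aux: "(a::'a::ab_group_add) + - (a + b + b) = - (b + b)"
  by (simp add: algebra_simps)

context spin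
begin

lemma QK_single:
  assumes g: "g \<in> Atheta" and ln: "length ys = m"
  shows "\<exists>L. (\<forall>w\<in>set L. fst w \<in> Atheta \<and> set (snd w) \<subseteq> Atheta \<and> length (snd w) = m)
     \<and> (\<lambda>y. sum_list (map (\<lambda>w. pfK \<theta> Kset \<gamma> w y) L)) = (\<lambda>z. sm (g z) (cliff_prod \<gamma> (map rv ys)))"
proof (intro exI[of _ "[(pre \<theta> Kset ys g, map uu ys)]"] conjI)
  show "\<forall>w\<in>set [(pre \<theta> Kset ys g, map uu ys)]. fst w \<in> Atheta \<and> set (snd w) \<subseteq> Atheta \<and> length (snd w) = m"
    using g ln by (auto simp: pre_Atheta uu_Atheta)
  show "(\<lambda>y. sum_list (map (\<lambda>w. pfK \<theta> Kset \<gamma> w y) [(pre \<theta> Kset ys g, map uu ys)])) = (\<lambda>z. sm (g z) (cliff_prod \<gamma> (map rv ys)))"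
    by (simp add: pre_pfK)
qed

lemma JK_single:
  assumes g: "g \<in> Atheta" and ln: "length ys = k"
  shows "\<exists>L. (\<forall>w\<in>set L. fst w \<in> Atheta \<and> set (snd w) \<subseteq> Atheta \<and> length (snd w) = Suc k)
     \<and> (\<lambda>y. sum_list (map (\<lambda>w. pfK \<theta> Kset \<gamma> w y) L)) = (\<lambda>y. 0)
     \<and> (\<lambda>y. sum_list (map (\<lambda>w. pdfK \<theta> Kset \<gamma> w y) L)) = (\<lambda>z. sm (g z) (cliff_prod \<gamma> (map rv ys)))"
proof -
  define i0 :: 'n where "i0 = undefined"
  define e :: "int^'n" where "e = axis i0 1"
  have re: "rv e = axis i0 1" by (simp add: e_def rv_axis)
  define q0 where "q0 = qform Kset (axis i0 1 :: real^'n)"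
  have q0: "q0 \<noteq> 0" by (simp add: q0_def qform_axis)
  define G where "G = \<gamma> (axis i0 1)"
  have GG: "G ** G = mat (complex_of_real q0)" by (simp add: G_def q0_def gc)
  define C where "C = cliff_prod \<gamma> (map rv ys)"
  define S where "S = sum_list ys"
  define c0 where "c0 = inverse (-2 * cD Kset * complex_of_real q0)"
  define h where "h = (\<lambda>z. c0 * g z)"
  have h: "h \<in> Atheta" unfolding h_def by (rule Atheta_const[OF g])
  define ys1 where "ys1 = e # ys"
  define ys2 where "ys2 = (- e) # ys"
  define L where "L = [(pre \<theta> Kset ys1 h, map uu ys1), (pre \<theta> Kset ys2 h, map uu ys2)]"
  have C1: "cliff_prod \<gamma> (map rv ys1) = G ** C" by (simp add: ys1_def cliff_prod_Cons re G_def C_def)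
  have C2: "cliff_prod \<gamma> (map rv ys2) = - (G ** C)"
    by (simp add: ys2_def cliff_prod_Cons rv_minus re Gm_minus G_def C_def matrix_neg_left')
  show ?thesis
  proof (intro exI[of _ L] conjI)
    show "\<forall>w\<in>set L. fst w \<in> Atheta \<and> set (snd w) \<subseteq> Atheta \<and> length (snd w) = Suc k"
      using h ln by (auto simp: L_def ys1_def ys2_def pre_Atheta uu_Atheta)
    show "(\<lambda>y. sum_list (map (\<lambda>w. pfK \<theta> Kset \<gamma> w y) L)) = (\<lambda>y. 0)"
      by (simp add: L_def pre_pfK C1 C2 sm_minus_right)
    show "(\<lambda>y. sum_list (map (\<lambda>w. pdfK \<theta> Kset \<gamma> w y) L)) = (\<lambda>z. sm (g z) (cliff_prod \<gamma> (map rv ys)))"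
    proof
      fix z
      define W where "W = \<gamma> (rv (z - (e + S)))"
      have W2: "\<gamma> (rv (z - (- e + S))) = W + G + G"
      proof -
        have eq: "z - (- e + S) = (z - (e + S)) + e + e" by (simp add: algebra_simps)
        have "rv (z - (- e + S)) = rv (z - (e + S)) + axis i0 1 + axis i0 1" by (simp only: eq rv_add re)
        then show ?thesis by (simp only: W_def G_def linear_add[OF gl])
      qed
      have s1: "sum_list ys1 = e + S" by (simp add: ys1_def S_def)
      have s2: "sum_list ys2 = - e + S" by (simp add: ys2_def S_def)
      have W1': "\<gamma> (rv (z - sum_list ys1)) = W" unfolding s1 W_def ..
      have W2': "\<gamma> (rv (z - sum_list ys2)) = W + G + G" unfolding s2 by (rule W2)
      have "sum_list (map (\<lambda>w. pdfK \<theta> Kset \<gamma> w z) L)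
          = sm (cD Kset * h z) (\<gamma> (rv (z - sum_list ys1)) ** cliff_prod \<gamma> (map rv ys1))
            + (sm (cD Kset * h z) (\<gamma> (rv (z - sum_list ys2)) ** cliff_prod \<gamma> (map rv ys2)) + 0)"
        by (simp only: L_def pre_pdfK list.map sum_list.Cons sum_list.Nil fst_conv snd_conv)
      also have "\<dots> = sm (cD Kset * h z) (W ** (G ** C)) + sm (cD Kset * h z) ((W + G + G) ** (- (G ** C)))"
        by (simp only: W1' W2' C1 C2 add_0_right)
      also have "\<dots> = sm (cD Kset * h z) (- (G ** (G ** C) + G ** (G ** C)))"
      proof -
        have n: "(W + G + G) ** (- (G ** C)) = - (W ** (G ** C) + G ** (G ** C) + G ** (G ** C))"
          by (simp only: matrix_neg_right' matrix_add_rdistrib')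
        show ?thesis by (simp only: n sm_add_right[symmetric] grp_aux)
      qed
      also have "G ** (G ** C) = sm (complex_of_real q0) C"
        by (simp only: matrix_mul_assoc GG mat_mm_left)
      also have "sm (cD Kset * h z) (- (sm (complex_of_real q0) C + sm (complex_of_real q0) C)) = sm (g z) C"
        using q0 cD_nonzero[of Kset]
        by (simp add: sm_minus_right sm_mult sm_add_left[symmetric] sm_minus_left[symmetric] h_def c0_def field_simps)
      finally show "sum_list (map (\<lambda>w. pdfK \<theta> Kset \<gamma> w z) L) = sm (g z) (cliff_prod \<gamma> (map rv ys))"
        unfolding C_def .
    qed
  qed
qed

end


context spin
begin

lemma F_pf:
  assumes "\<forall>w\<in>set L. fst w \<in> Atheta \<and> set (snd w) \<subseteq> Atheta \<and> length (snd w) = n"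
  shows "restrict (opsum (pi_form \<theta> Kset \<gamma>) L) Hdom = restrict (Top \<theta> (\<lambda>y. sum_list (map (\<lambda>w. pfK \<theta> Kset \<gamma> w y) L))) Hdom"
proof (rule restrict_ext)
  fix xi :: "int^'n \<Rightarrow> complex^'s" assume xi: "xi \<in> Hdom"
  show "opsum (pi_form \<theta> Kset \<gamma>) L xi = Top \<theta> (\<lambda>y. sum_list (map (\<lambda>w. pfK \<theta> Kset \<gamma> w y) L)) xi"
  proof (rule opsum_Top)
    fix w assume w: "w \<in> set L"
    then show "pi_form \<theta> Kset \<gamma> w xi = Top \<theta> (pfK \<theta> Kset \<gamma> w) xi" using assms xi by (intro pi_form_Top) auto
  next
    fix w assume w: "w \<in> set L"
    then show "rapid (pfK \<theta> Kset \<gamma> w)" using assms by (intro pfK_rapid) auto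
  next
    show "rapid xi" using xi by (simp add: Hdom_def)
  qed
qed

lemma F_pdf:
  assumes "\<forall>w\<in>set L. fst w \<in> Atheta \<and> set (snd w) \<subseteq> Atheta \<and> length (snd w) = n"
  shows "restrict (opsum (pi_dform \<theta> Kset \<gamma>) L) Hdom = restrict (Top \<theta> (\<lambda>y. sum_list (map (\<lambda>w. pdfK \<theta> Kset \<gamma> w y) L))) Hdom"
proof (rule restrict_ext)
  fix xi :: "int^'n \<Rightarrow> complex^'s" assume xi: "xi \<in> Hdom"
  show "opsum (pi_dform \<theta> Kset \<gamma>) L xi = Top \<theta> (\<lambda>y. sum_list (map (\<lambda>w. pdfK \<theta> Kset \<gamma> w y) L)) xi"
  proof (rule opsum_Top)
    fix w assume w: "w \<in> set L"
    then show "pi_dform \<theta> Kset \<gamma> w xi = Top \<theta> (pdfK \<theta> Kset \<gamma> w) xi" using assms xi by (intro pi_dform_Top) auto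
  next
    fix w assume w: "w \<in> set L"
    then show "rapid (pdfK \<theta> Kset \<gamma> w)" using assms by (intro pdfK_rapid) auto
  next
    show "rapid xi" using xi by (simp add: Hdom_def)
  qed
qed

lemma F_g:
  assumes "\<forall>w\<in>set L. fst w \<in> Atheta \<and> length (snd w) = n"
  shows "restrict (opsum (gamma_op \<theta> \<gamma>) L) Hdom = restrict (Top \<theta> (gk \<gamma> L)) Hdom"
proof (rule restrict_ext)
  fix xi :: "int^'n \<Rightarrow> complex^'s" assume xi: "xi \<in> Hdom"
  show "opsum (gamma_op \<theta> \<gamma>) L xi = Top \<theta> (gk \<gamma> L) xi"
    unfolding gk_def
    by (rule opsum_Top) (use assms xi in \<open>auto intro: gamma_op_Top' rapid_sm simp: Hdom_def Atheta_def\<close>)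
qed

lemma F_junk:
  assumes "\<forall>w\<in>set L. fst w \<in> Atheta \<and> set (snd w) \<subseteq> Atheta \<and> length (snd w) = n"
  shows "(\<forall>xi\<in>Hdom. opsum (pi_form \<theta> Kset \<gamma>) L xi = (\<lambda>x. 0)) \<longleftrightarrow> (\<lambda>y. sum_list (map (\<lambda>w. pfK \<theta> Kset \<gamma> w y) L)) = (\<lambda>y. 0)"
proof -
  have e: "opsum (pi_form \<theta> Kset \<gamma>) L xi = Top \<theta> (\<lambda>y. sum_list (map (\<lambda>w. pfK \<theta> Kset \<gamma> w y) L)) xi" if "xi \<in> Hdom" for xi
    using fun_cong[OF F_pf[OF assms], of xi] that by simp
  show ?thesis
  proof
    assume "\<forall>xi\<in>Hdom. opsum (pi_form \<theta> Kset \<gamma>) L xi = (\<lambda>x. 0)"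
    then show "(\<lambda>y. sum_list (map (\<lambda>w. pfK \<theta> Kset \<gamma> w y) L)) = (\<lambda>y. 0)"
      using e by (intro Top_unique[OF th]) auto
  next
    assume "(\<lambda>y. sum_list (map (\<lambda>w. pfK \<theta> Kset \<gamma> w y) L)) = (\<lambda>y. 0)"
    then show "\<forall>xi\<in>Hdom. opsum (pi_form \<theta> Kset \<gamma>) L xi = (\<lambda>x. 0)"
      using e by (simp add: Top_zero_kernel)
  qed
qed

lemma part1:
  "{restrict (opsum (pi_form \<theta> Kset \<gamma>) L) Hdom | L.
         \<forall>w\<in>set L. fst w \<in> Atheta \<and> set (snd w) \<subseteq> Atheta \<and> length (snd w) = m}
    = {restrict (opsum (gamma_op \<theta> \<gamma>) L) Hdom | L.
         \<forall>w\<in>set L. fst w \<in> Atheta \<and> length (snd w) = m}"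
proof (intro equalityI subsetI)
  fix x assume "x \<in> {restrict (opsum (pi_form \<theta> Kset \<gamma>) L) Hdom | L.
         \<forall>w\<in>set L. fst w \<in> Atheta \<and> set (snd w) \<subseteq> Atheta \<and> length (snd w) = m}"
  then obtain L where x: "x = restrict (opsum (pi_form \<theta> Kset \<gamma>) L) Hdom"
    and L: "\<forall>w\<in>set L. fst w \<in> Atheta \<and> set (snd w) \<subseteq> Atheta \<and> length (snd w) = m" by blast
  have "(\<lambda>y. sum_list (map (\<lambda>w. pfK \<theta> Kset \<gamma> w y) L)) \<in> PK \<gamma> m"
    by (rule PK_sum_list) (use L pfK_PK in force)
  then obtain L' where L': "(\<lambda>y. sum_list (map (\<lambda>w. pfK \<theta> Kset \<gamma> w y) L)) = gk \<gamma> L'"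
    "\<forall>w\<in>set L'. fst w \<in> Atheta \<and> length (snd w) = m" unfolding PK_def by blast
  have "x = restrict (opsum (gamma_op \<theta> \<gamma>) L') Hdom"
    using x F_pf[OF L] F_g[OF L'(2)] L'(1) by simp
  then show "x \<in> {restrict (opsum (gamma_op \<theta> \<gamma>) L) Hdom | L. \<forall>w\<in>set L. fst w \<in> Atheta \<and> length (snd w) = m}"
    by (intro CollectI exI[of _ L'] conjI L'(2))
next
  fix x assume "x \<in> {restrict (opsum (gamma_op \<theta> \<gamma>) L) Hdom | L. \<forall>w\<in>set L. fst w \<in> Atheta \<and> length (snd w) = m}"
  then obtain L' where x: "x = restrict (opsum (gamma_op \<theta> \<gamma>) L') Hdom"
    and L': "\<forall>w\<in>set L'. fst w \<in> Atheta \<and> length (snd w) = m" by blast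
  define Q where "Q = {(\<lambda>y. sum_list (map (\<lambda>w. pfK \<theta> Kset \<gamma> w y) L)) | L.
         \<forall>w\<in>set L. fst w \<in> Atheta \<and> set (snd w) \<subseteq> Atheta \<and> length (snd w) = m}"
  have "gk \<gamma> L' \<in> Q"
  proof (rule PK_closure[where k=m])
    show "(\<lambda>y. 0) \<in> Q" unfolding Q_def by (intro CollectI exI[of _ "[]"]) auto
    show "(\<lambda>y. K1 y + K2 y) \<in> Q" if K1in: "K1 \<in> Q" and K2in: "K2 \<in> Q" for K1 K2
    proof -
      obtain L1 where A1: "K1 = (\<lambda>y. sum_list (map (\<lambda>w. pfK \<theta> Kset \<gamma> w y) L1))"
        "\<forall>w\<in>set L1. fst w \<in> Atheta \<and> set (snd w) \<subseteq> Atheta \<and> length (snd w) = m"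
        using K1in unfolding Q_def by blast
      obtain L2 where A2: "K2 = (\<lambda>y. sum_list (map (\<lambda>w. pfK \<theta> Kset \<gamma> w y) L2))"
        "\<forall>w\<in>set L2. fst w \<in> Atheta \<and> set (snd w) \<subseteq> Atheta \<and> length (snd w) = m"
        using K2in unfolding Q_def by blast
      have e: "(\<lambda>y. K1 y + K2 y) = (\<lambda>y. sum_list (map (\<lambda>w. pfK \<theta> Kset \<gamma> w y) (L1 @ L2)))"
        using A1(1) A2(1) by simp
      have g: "\<forall>w\<in>set (L1 @ L2). fst w \<in> Atheta \<and> set (snd w) \<subseteq> Atheta \<and> length (snd w) = m"
        using A1(2) A2(2) by auto
      show ?thesis unfolding Q_def by (rule CollectI, rule exI[of _ "L1 @ L2"], intro conjI e g)
    qed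
    show "(\<lambda>z. sm (g z) (cliff_prod \<gamma> (map rv ys))) \<in> Q" if gA: "g \<in> Atheta" and ly: "length ys = m" for g ys
    proof -
      obtain L0 where L0: "\<forall>w\<in>set L0. fst w \<in> Atheta \<and> set (snd w) \<subseteq> Atheta \<and> length (snd w) = m"
        "(\<lambda>y. sum_list (map (\<lambda>w. pfK \<theta> Kset \<gamma> w y) L0)) = (\<lambda>z. sm (g z) (cliff_prod \<gamma> (map rv ys)))"
        using QK_single[OF gA ly] by blast
      show ?thesis unfolding Q_def
        by (rule CollectI, rule exI[of _ L0], rule conjI[OF L0(2)[symmetric] L0(1)])
    qed
    show "gk \<gamma> L' \<in> PK \<gamma> m" unfolding PK_def using L' by blast
  qed
  then obtain L where L: "gk \<gamma> L' = (\<lambda>y. sum_list (map (\<lambda>w. pfK \<theta> Kset \<gamma> w y) L))"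
    "\<forall>w\<in>set L. fst w \<in> Atheta \<and> set (snd w) \<subseteq> Atheta \<and> length (snd w) = m" unfolding Q_def by blast
  have "x = restrict (opsum (pi_form \<theta> Kset \<gamma>) L) Hdom"
    using x F_pf[OF L(2)] F_g[OF L'] L(1) by simp
  then show "x \<in> {restrict (opsum (pi_form \<theta> Kset \<gamma>) L) Hdom | L.
         \<forall>w\<in>set L. fst w \<in> Atheta \<and> set (snd w) \<subseteq> Atheta \<and> length (snd w) = m}"
    by (intro CollectI exI[of _ L] conjI L(2))
qed

lemma part2:
  assumes m: "2 \<le> m"
  shows "{restrict (opsum (pi_dform \<theta> Kset \<gamma>) L) Hdom | L.
         (\<forall>w\<in>set L. fst w \<in> Atheta \<and> set (snd w) \<subseteq> Atheta \<and> length (snd w) = m - 1)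
         \<and> (\<forall>xi\<in>Hdom. opsum (pi_form \<theta> Kset \<gamma>) L xi = (\<lambda>x. 0))}
    = {restrict (opsum (gamma_op \<theta> \<gamma>) L) Hdom | L.
         \<forall>w\<in>set L. fst w \<in> Atheta \<and> length (snd w) = m - 2}"
proof -
  define k where "k = m - 2"
  have mk: "m - 1 = Suc k" using m by (simp add: k_def)
  show ?thesis unfolding mk k_def[symmetric]
  proof (intro equalityI subsetI)
    fix x assume "x \<in> {restrict (opsum (pi_dform \<theta> Kset \<gamma>) L) Hdom | L.
         (\<forall>w\<in>set L. fst w \<in> Atheta \<and> set (snd w) \<subseteq> Atheta \<and> length (snd w) = Suc k)
         \<and> (\<forall>xi\<in>Hdom. opsum (pi_form \<theta> Kset \<gamma>) L xi = (\<lambda>x. 0))}"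
    then obtain L where x: "x = restrict (opsum (pi_dform \<theta> Kset \<gamma>) L) Hdom"
      and L: "\<forall>w\<in>set L. fst w \<in> Atheta \<and> set (snd w) \<subseteq> Atheta \<and> length (snd w) = Suc k"
      and J: "\<forall>xi\<in>Hdom. opsum (pi_form \<theta> Kset \<gamma>) L xi = (\<lambda>x. 0)" by blast
    have "(\<lambda>y. sum_list (map (\<lambda>w. pdfK \<theta> Kset \<gamma> w y) L)) \<in> PK \<gamma> k"
      by (rule junk_PK[OF L]) (use F_junk[OF L] J in blast)
    then obtain L' where L': "(\<lambda>y. sum_list (map (\<lambda>w. pdfK \<theta> Kset \<gamma> w y) L)) = gk \<gamma> L'"
      "\<forall>w\<in>set L'. fst w \<in> Atheta \<and> length (snd w) = k" unfolding PK_def by blast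
    have "x = restrict (opsum (gamma_op \<theta> \<gamma>) L') Hdom"
      using x F_pdf[OF L] F_g[OF L'(2)] L'(1) by simp
    then show "x \<in> {restrict (opsum (gamma_op \<theta> \<gamma>) L) Hdom | L. \<forall>w\<in>set L. fst w \<in> Atheta \<and> length (snd w) = k}"
      by (intro CollectI exI[of _ L'] conjI L'(2))
  next
    fix x assume "x \<in> {restrict (opsum (gamma_op \<theta> \<gamma>) L) Hdom | L. \<forall>w\<in>set L. fst w \<in> Atheta \<and> length (snd w) = k}"
    then obtain L' where x: "x = restrict (opsum (gamma_op \<theta> \<gamma>) L') Hdom"
      and L': "\<forall>w\<in>set L'. fst w \<in> Atheta \<and> length (snd w) = k" by blast
    define Q where "Q = {(\<lambda>y. sum_list (map (\<lambda>w. pdfK \<theta> Kset \<gamma> w y) L)) | L.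
         (\<forall>w\<in>set L. fst w \<in> Atheta \<and> set (snd w) \<subseteq> Atheta \<and> length (snd w) = Suc k)
         \<and> (\<lambda>y. sum_list (map (\<lambda>w. pfK \<theta> Kset \<gamma> w y) L)) = (\<lambda>y. 0)}"
    have "gk \<gamma> L' \<in> Q"
    proof (rule PK_closure[where k=k])
      show "(\<lambda>y. 0) \<in> Q" unfolding Q_def by (intro CollectI exI[of _ "[]"]) auto
      show "(\<lambda>y. K1 y + K2 y) \<in> Q" if K1in: "K1 \<in> Q" and K2in: "K2 \<in> Q" for K1 K2
      proof -
        obtain L1 where A1: "K1 = (\<lambda>y. sum_list (map (\<lambda>w. pdfK \<theta> Kset \<gamma> w y) L1))"
          "\<forall>w\<in>set L1. fst w \<in> Atheta \<and> set (snd w) \<subseteq> Atheta \<and> length (snd w) = Suc k"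
          "(\<lambda>y. sum_list (map (\<lambda>w. pfK \<theta> Kset \<gamma> w y) L1)) = (\<lambda>y. 0)"
          using K1in unfolding Q_def by blast
        obtain L2 where A2: "K2 = (\<lambda>y. sum_list (map (\<lambda>w. pdfK \<theta> Kset \<gamma> w y) L2))"
          "\<forall>w\<in>set L2. fst w \<in> Atheta \<and> set (snd w) \<subseteq> Atheta \<and> length (snd w) = Suc k"
          "(\<lambda>y. sum_list (map (\<lambda>w. pfK \<theta> Kset \<gamma> w y) L2)) = (\<lambda>y. 0)"
          using K2in unfolding Q_def by blast
        note A = A1 A2
        have z: "(\<lambda>y. sum_list (map (\<lambda>w. pfK \<theta> Kset \<gamma> w y) (L1 @ L2))) = (\<lambda>y. 0)"
        proof
          fix y
          show "sum_list (map (\<lambda>w. pfK \<theta> Kset \<gamma> w y) (L1 @ L2)) = 0"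
            using fun_cong[OF A(3), of y] fun_cong[OF A(6), of y] by simp
        qed
        have e: "(\<lambda>y. K1 y + K2 y) = (\<lambda>y. sum_list (map (\<lambda>w. pdfK \<theta> Kset \<gamma> w y) (L1 @ L2)))"
          using A1(1) A2(1) by simp
        have g: "\<forall>w\<in>set (L1 @ L2). fst w \<in> Atheta \<and> set (snd w) \<subseteq> Atheta \<and> length (snd w) = Suc k"
          using A1(2) A2(2) by auto
        show ?thesis unfolding Q_def by (rule CollectI, rule exI[of _ "L1 @ L2"], intro conjI e g z)
      qed
      show "(\<lambda>z. sm (g z) (cliff_prod \<gamma> (map rv ys))) \<in> Q" if gA: "g \<in> Atheta" and ly: "length ys = k" for g ys
      proof -
        obtain L0 where L0: "\<forall>w\<in>set L0. fst w \<in> Atheta \<and> set (snd w) \<subseteq> Atheta \<and> length (snd w) = Suc k"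
          "(\<lambda>y. sum_list (map (\<lambda>w. pfK \<theta> Kset \<gamma> w y) L0)) = (\<lambda>y. 0)"
          "(\<lambda>y. sum_list (map (\<lambda>w. pdfK \<theta> Kset \<gamma> w y) L0)) = (\<lambda>z. sm (g z) (cliff_prod \<gamma> (map rv ys)))"
          using JK_single[OF gA ly] by blast
        show ?thesis unfolding Q_def
          by (rule CollectI, rule exI[of _ L0], intro conjI L0(3)[symmetric] L0(1) L0(2))
      qed
      show "gk \<gamma> L' \<in> PK \<gamma> k" unfolding PK_def using L' by blast
    qed
    then obtain L where L: "gk \<gamma> L' = (\<lambda>y. sum_list (map (\<lambda>w. pdfK \<theta> Kset \<gamma> w y) L))"
      "\<forall>w\<in>set L. fst w \<in> Atheta \<and> set (snd w) \<subseteq> Atheta \<and> length (snd w) = Suc k"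
      "(\<lambda>y. sum_list (map (\<lambda>w. pfK \<theta> Kset \<gamma> w y) L)) = (\<lambda>y. 0)" unfolding Q_def by blast
    have J: "\<forall>xi\<in>Hdom. opsum (pi_form \<theta> Kset \<gamma>) L xi = (\<lambda>x. 0)" using F_junk[OF L(2)] L(3) by blast
    have "x = restrict (opsum (pi_dform \<theta> Kset \<gamma>) L) Hdom"
      using x F_pdf[OF L(2)] F_g[OF L'] L(1) by simp
    then show "x \<in> {restrict (opsum (pi_dform \<theta> Kset \<gamma>) L) Hdom | L.
         (\<forall>w\<in>set L. fst w \<in> Atheta \<and> set (snd w) \<subseteq> Atheta \<and> length (snd w) = Suc k)
         \<and> (\<forall>xi\<in>Hdom. opsum (pi_form \<theta> Kset \<gamma>) L xi = (\<lambda>x. 0))}"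
      by (intro CollectI exI[of _ L] conjI L(2) J)
  qed
qed

end

theorem lemma7p2:
  fixes \<theta> :: "real^'n::finite \<Rightarrow> real^'n \<Rightarrow> real"
    and K :: "'n set"
    and \<gamma> :: "real^'n \<Rightarrow> complex^'s::finite^'s"
    and m :: nat
  assumes theta_bil: "bilinear \<theta>"
    and theta_antisym: "\<And>x y. \<theta> x y = - \<theta> y x"
    and gamma_lin: "linear \<gamma>"
    and gamma_cliff: "\<And>v. \<gamma> v ** \<gamma> v = mat (complex_of_real (qform K v))"
    and spinor_dim: "CARD('s) = 2 ^ (CARD('n) div 2)"
  shows "(1 \<le> m \<longrightarrow>
      {restrict (opsum (pi_form \<theta> K \<gamma>) L) Hdom | L.
         \<forall>w\<in>set L. fst w \<in> Atheta \<and> set (snd w) \<subseteq> Atheta \<and> length (snd w) = m}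
    = {restrict (opsum (gamma_op \<theta> \<gamma>) L) Hdom | L.
         \<forall>w\<in>set L. fst w \<in> Atheta \<and> length (snd w) = m})
   \<and> (2 \<le> m \<longrightarrow>
      {restrict (opsum (pi_dform \<theta> K \<gamma>) L) Hdom | L.
         (\<forall>w\<in>set L. fst w \<in> Atheta \<and> set (snd w) \<subseteq> Atheta \<and> length (snd w) = m - 1)
         \<and> (\<forall>xi\<in>Hdom. opsum (pi_form \<theta> K \<gamma>) L xi = (\<lambda>x. 0))}
    = {restrict (opsum (gamma_op \<theta> \<gamma>) L) Hdom | L.
         \<forall>w\<in>set L. fst w \<in> Atheta \<and> length (snd w) = m - 2})"
proof -
  interpret spin \<theta> K \<gamma>
    using theta_bil gamma_lin gamma_cliff by (simp add: spin_def)
  show ?thesis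
  proof (intro conjI impI)
    show "{restrict (opsum (pi_form \<theta> K \<gamma>) L) Hdom | L.
         \<forall>w\<in>set L. fst w \<in> Atheta \<and> set (snd w) \<subseteq> Atheta \<and> length (snd w) = m}
    = {restrict (opsum (gamma_op \<theta> \<gamma>) L) Hdom | L.
         \<forall>w\<in>set L. fst w \<in> Atheta \<and> length (snd w) = m}" by (rule part1)
  next
    assume "2 \<le> m"
    then show "{restrict (opsum (pi_dform \<theta> K \<gamma>) L) Hdom | L.
         (\<forall>w\<in>set L. fst w \<in> Atheta \<and> set (snd w) \<subseteq> Atheta \<and> length (snd w) = m - 1)
         \<and> (\<forall>xi\<in>Hdom. opsum (pi_form \<theta> K \<gamma>) L xi = (\<lambda>x. 0))}
    = {restrict (opsum (gamma_op \<theta> \<gamma>) L) Hdom | L.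
         \<forall>w\<in>set L. fst w \<in> Atheta \<and> length (snd w) = m - 2}" by (rule part2)
  qed
qed


end
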